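(* Fix $\tau>0$ and $\mu\in(0,1)$, and for each $N\in\mathbb N$ let $X^N$ be the continuous-time process on $\Omega_N$ defined in the context, with initial condition $X^N_j(0)=\mu N$ for all $j$. Define the rescaled process $$Y^N(t)=\begin{cases}\dfrac{X^N_{-\lfloor\tau N\rfloor}(N(t+\tau))}{N}, & t\in[-\tau,0),\\[2mm] \dfrac{X^N_0(Nt)}{N}, & t\ge 0.\end{cases}$$ Then for every $T>0$ the sequence of processes $\{Y^N(t):t\in[-\tau,T]\}_{N\ge1}$ converges in probability, in the Skorokhod topology of $D([-\tau,T],\mathbb R)$, to the unique continuous solution $u:[-\tau,T]\to\mathbb R$ of the delayed logistic (Hutchinson) equation $$u'(t)=\tfrac12\,u(t)\bigl(1-u(t-\tau)\bigr)\ \ (t>0),\qquad u(t)=\mu\ \ (t\in[-\tau,0]).$$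
   Context: Model. Fix $\tau>0$, $\mu\ge 0$, $N\in\mathbb N=\{1,2,\dots\}$, and write $L=\lfloor \tau N\rfloor$. The state space is $\Omega_N=[0,\infty)^{L+1}$, with elements $x=(x_{-L},\dots,x_{-1},x_0)$ ($x_0$ is the "present", $x_{-L}$ the state $L$ jumps in the past). Define maps $\theta_N^\pm:\Omega_N\to\Omega_N$ by $(\theta_N^\pm x)_j=x_{j+1}$ for $-L\le j<0$, and $(\theta_N^+x)_0=x_0(1+\frac1N)$, $(\theta_N^-x)_0=\max\{x_0(1-\frac{x_{-L}}{N^2}),0\}$. Let $\xi^N=(\xi^N(n))_{n\ge0}$ be the discrete-time Markov chain on $\Omega_N$ which from $x$ moves to $\theta_N^+x$ with probability $1/2$ and to $\theta_N^-x$ with probability $1/2$, started from $\xi^N_j(0)=\mu N$ for all $j\in\{-L,\dots,0\}$. Let $(\sigma_n)_{n\ge1}$ be i.i.d. exponential random variables of parameter $1$, independent of $\xi^N$, $J_0=0$, $J_n=\sigma_1+\dots+\sigma_n$, and $X^N(t)=\xi^N(n)$ for $t\in[J_n,J_{n+1})$. Thus $X^N=(X^N_{-L}(t),\dots,X^N_0(t))_{t\ge0}$ is a continuous-time Markov chain with generator $\mathsf L_Nf(x)=\frac12(f(\theta_N^+x)-f(x))+\frac12(f(\theta_N^-x)-f(x))$. *)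

theory Defs
  imports "HOL-Probability.Probability"
begin

definition L_of :: "real \<Rightarrow> nat \<Rightarrow> nat" where
  "L_of \<tau> N = nat \<lfloor>\<tau> * real N\<rfloor>"

text \<open>States x = (x_{-L},...,x_0) are represented as functions int => real;
  only indices -L..0 are meaningful.\<close>
definition theta_plus :: "nat \<Rightarrow> (int \<Rightarrow> real) \<Rightarrow> (int \<Rightarrow> real)" where
  "theta_plus N x = (\<lambda>j. if j < 0 then x (j + 1)
                         else if j = 0 then x 0 * (1 + 1 / real N) else 0)"

definition theta_minus :: "real \<Rightarrow> nat \<Rightarrow> (int \<Rightarrow> real) \<Rightarrow> (int \<Rightarrow> real)" where
  "theta_minus \<tau> N x = (\<lambda>j. if j < 0 then x (j + 1)
      else if j = 0 then max (x 0 * (1 - x (- int (L_of \<tau> N)) / (real N)^2)) 0 else 0)"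

text \<open>Sample space: for each step n a fair coin (fst) and an Exp(1) holding time (snd),
  all independent.\<close>
definition step_space :: "(bool \<times> real) measure" where
  "step_space = measure_pmf (bernoulli_pmf (1/2)) \<Otimes>\<^sub>M density lborel (exponential_density 1)"

definition hp_space :: "(nat \<Rightarrow> bool \<times> real) measure" where
  "hp_space = (\<Pi>\<^sub>M n\<in>(UNIV::nat set). step_space)"

primrec xi :: "real \<Rightarrow> real \<Rightarrow> nat \<Rightarrow> (nat \<Rightarrow> bool \<times> real) \<Rightarrow> nat \<Rightarrow> (int \<Rightarrow> real)" where
  "xi \<tau> \<mu> N \<omega> 0 = (\<lambda>j. \<mu> * real N)"
| "xi \<tau> \<mu> N \<omega> (Suc n) =
     (if fst (\<omega> n) then theta_plus N (xi \<tau> \<mu> N \<omega> n) else theta_minus \<tau> N (xi \<tau> \<mu> N \<omega> n))"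

definition jump_time :: "(nat \<Rightarrow> bool \<times> real) \<Rightarrow> nat \<Rightarrow> real" where
  "jump_time \<omega> n = (\<Sum>k<n. snd (\<omega> k))"

definition njumps :: "(nat \<Rightarrow> bool \<times> real) \<Rightarrow> real \<Rightarrow> nat" where
  "njumps \<omega> t = card {n. 0 < n \<and> jump_time \<omega> n \<le> t}"

definition Xproc :: "real \<Rightarrow> real \<Rightarrow> nat \<Rightarrow> (nat \<Rightarrow> bool \<times> real) \<Rightarrow> real \<Rightarrow> (int \<Rightarrow> real)" where
  "Xproc \<tau> \<mu> N \<omega> t = xi \<tau> \<mu> N \<omega> (njumps \<omega> t)"

definition Yproc :: "real \<Rightarrow> real \<Rightarrow> nat \<Rightarrow> (nat \<Rightarrow> bool \<times> real) \<Rightarrow> real \<Rightarrow> real" where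
  "Yproc \<tau> \<mu> N \<omega> t =
     (if t < 0 then Xproc \<tau> \<mu> N \<omega> (real N * (t + \<tau>)) (- int (L_of \<tau> N)) / real N
      else Xproc \<tau> \<mu> N \<omega> (real N * t) 0 / real N)"

definition skorokhod_dist :: "real \<Rightarrow> real \<Rightarrow> (real \<Rightarrow> real) \<Rightarrow> (real \<Rightarrow> real) \<Rightarrow> ereal" where
  "skorokhod_dist a b x y =
     (INF l \<in> {l. strict_mono_on {a..b} l \<and> continuous_on {a..b} l \<and> l ` {a..b} = {a..b}}.
        max (SUP t\<in>{a..b}. ereal \<bar>l t - t\<bar>) (SUP t\<in>{a..b}. ereal \<bar>x t - y (l t)\<bar>))"

definition hutchinson_sol :: "real \<Rightarrow> real \<Rightarrow> real \<Rightarrow> (real \<Rightarrow> real) \<Rightarrow> bool" where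
  "hutchinson_sol \<tau> \<mu> T u \<longleftrightarrow>
     continuous_on {-\<tau>..T} u \<and> (\<forall>t\<in>{-\<tau>..0}. u t = \<mu>) \<and>
     (\<forall>t\<in>{0<..T}. (u has_real_derivative (u t * (1 - u (t - \<tau>)) / 2)) (at t within {-\<tau>..T}))"

end

theory Submission
  imports Defs
begin

fun fk :: "real \<Rightarrow> real \<Rightarrow> nat \<Rightarrow> real \<Rightarrow> real" where
  "fk \<tau> \<mu> 0 = (\<lambda>t. \<mu>)"
| "fk \<tau> \<mu> (Suc k) = (\<lambda>t. \<mu> * exp (integral {0..max 0 t} (\<lambda>s. (1 - fk \<tau> \<mu> k (s - \<tau>)) / 2)))"

lemma fk_cont: "continuous_on UNIV (fk \<tau> \<mu> k)"
proof (induction k)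
  case 0 then show ?case by simp
next
  case (Suc k)
  define g where "g = (\<lambda>s. (1 - fk \<tau> \<mu> k (s - \<tau>)) / 2)"
  have gc: "continuous_on UNIV g" unfolding g_def
    by (intro continuous_intros continuous_on_compose2[OF Suc]) auto
  have "isCont (\<lambda>t. integral {0..max 0 t} g) x" for x
  proof -
    define b where "b = \<bar>x\<bar> + 1"
    have "continuous_on {0..b} (\<lambda>t. integral {0..t} g)"
      by (intro indefinite_integral_continuous_1 integrable_continuous_interval continuous_on_subset[OF gc]) auto
    then have "continuous_on {-b..b} (\<lambda>t. integral {0..max 0 t} g)"
      by (rule continuous_on_compose2[where f="\<lambda>t. max 0 t"]) (auto intro!: continuous_intros simp: b_def)
    then show ?thesis
      by (rule continuous_on_interior) (auto simp: b_def)
  qed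
  then have "continuous_on UNIV (\<lambda>t. integral {0..max 0 t} g)"
    by (simp add: continuous_on_eq_continuous_at)
  then show ?case unfolding g_def[symmetric] fk.simps
    by (intro continuous_intros) auto
qed

lemma fk_le0: "t \<le> 0 \<Longrightarrow> fk \<tau> \<mu> k t = \<mu>"
  by (cases k) auto

lemma fk_step: "\<tau> > 0 \<Longrightarrow> t \<le> real k * \<tau> \<Longrightarrow> fk \<tau> \<mu> (Suc k) t = fk \<tau> \<mu> k t"
proof (induction k arbitrary: t)
  case 0 then show ?case by simp
next
  case (Suc k)
  show ?case
  proof (cases "t \<le> 0")
    case True then show ?thesis by (simp add: fk_le0)
  next
    case False
    have "integral {0..t} (\<lambda>s. (1 - fk \<tau> \<mu> (Suc k) (s - \<tau>)) / 2) = integral {0..t} (\<lambda>s. (1 - fk \<tau> \<mu> k (s - \<tau>)) / 2)"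
    proof (rule integral_cong)
      fix s assume "s \<in> {0..t}"
      then have "s - \<tau> \<le> real k * \<tau>" using Suc.prems by (auto simp: algebra_simps)
      then show "(1 - fk \<tau> \<mu> (Suc k) (s - \<tau>)) / 2 = (1 - fk \<tau> \<mu> k (s - \<tau>)) / 2"
        using Suc.IH Suc.prems by simp
    qed
    then show ?thesis using False by (simp only: fk.simps) (simp add: max_def)
  qed
qed

lemma fk_mono_eq: "\<tau> > 0 \<Longrightarrow> k \<le> m \<Longrightarrow> t \<le> real k * \<tau> \<Longrightarrow> fk \<tau> \<mu> m t = fk \<tau> \<mu> k t"
proof (induction m)
  case 0 then show ?case by simp
next
  case (Suc m)
  show ?case
  proof (cases "k = Suc m")
    case True then show ?thesis by simp
  next
    case False
    then have "k \<le> m" using Suc by auto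
    have "t \<le> real m * \<tau>" using Suc.prems \<open>k \<le> m\<close>
      by (meson mult_right_mono of_nat_le_iff order.trans less_imp_le)
    then show ?thesis using fk_step[OF Suc.prems(1) \<open>t \<le> real m * \<tau>\<close>] Suc \<open>k \<le> m\<close> by simp
  qed
qed

lemma sol_exists:
  fixes \<tau> \<mu> Tm :: real
  assumes "\<tau> > 0"
  shows "\<exists>u. (\<forall>t\<le>0. u t = \<mu>) \<and> continuous_on UNIV u \<and>
    (\<forall>x. 0 < x \<and> x < Tm \<longrightarrow> (u has_real_derivative u x * (1 - u (x - \<tau>)) / 2) (at x))"
proof -
  define k where "k = nat \<lceil>\<bar>Tm\<bar> / \<tau>\<rceil>"
  have kt: "Tm \<le> real (Suc k) * \<tau>"
  proof -
    have "\<bar>Tm\<bar> / \<tau> \<le> real k" unfolding k_def by linarith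
    then have "\<bar>Tm\<bar> \<le> real k * \<tau>" using assms by (simp add: field_simps)
    then show ?thesis using assms by (simp add: algebra_simps)
  qed
  define u where "u = fk \<tau> \<mu> (Suc k)"
  define g where "g = (\<lambda>s. (1 - fk \<tau> \<mu> k (s - \<tau>)) / 2)"
  have gc: "continuous_on UNIV g" unfolding g_def
    by (intro continuous_intros continuous_on_compose2[OF fk_cont]) auto
  have "(u has_real_derivative u x * (1 - u (x - \<tau>)) / 2) (at x)" if x: "0 < x" "x < Tm" for x
  proof -
    have "((\<lambda>t. integral {0..t} g) has_real_derivative g x) (at x within {0..x+1})"
      by (rule integral_has_real_derivative) (use x continuous_on_subset[OF gc] in auto)
    then have d1: "((\<lambda>t. integral {0..t} g) has_real_derivative g x) (at x)"
      using x by (subst (asm) at_within_interior) auto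
    have d2: "((\<lambda>t. \<mu> * exp (integral {0..t} g)) has_real_derivative \<mu> * (exp (integral {0..x} g) * g x)) (at x)"
      by (intro DERIV_cmult DERIV_chain2[OF DERIV_exp d1])
    have d3: "(u has_real_derivative \<mu> * (exp (integral {0..x} g) * g x)) (at x)"
      by (rule has_field_derivative_transform_within_open[OF d2, of "{0<..}"])
         (use x in \<open>auto simp: u_def g_def max_def\<close>)
    have "fk \<tau> \<mu> k (x - \<tau>) = u (x - \<tau>)"
      unfolding u_def using fk_step[OF assms, of "x - \<tau>" k] x kt by (auto simp: algebra_simps)
    then have "\<mu> * (exp (integral {0..x} g) * g x) = u x * (1 - u (x - \<tau>)) / 2"
      using x by (simp add: u_def g_def max_def)
    with d3 show ?thesis by simp
  qed
  moreover have "\<forall>t\<le>0. u t = \<mu>" by (simp add: u_def fk_le0)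
  moreover have "continuous_on UNIV u" unfolding u_def by (rule fk_cont)
  ultimately show ?thesis by blast
qed

locale hsol =
  fixes \<tau> \<mu> Tm :: real and u :: "real \<Rightarrow> real"
  assumes tau_pos: "\<tau> > 0"
    and u_le0: "\<And>t. t \<le> 0 \<Longrightarrow> u t = \<mu>"
    and u_cont: "continuous_on UNIV u"
    and u_deriv: "\<And>x. 0 < x \<Longrightarrow> x < Tm \<Longrightarrow> (u has_real_derivative u x * (1 - u (x - \<tau>)) / 2) (at x)"
begin

lemma u_isCont: "isCont u x"
  using u_cont by (simp add: continuous_on_eq_continuous_at)

lemma is_sol: "0 < T \<Longrightarrow> T < Tm \<Longrightarrow> hutchinson_sol \<tau> \<mu> T u"
  unfolding hutchinson_sol_def
  using u_cont u_le0 u_deriv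
  by (auto intro: continuous_on_subset has_field_derivative_at_within)

lemma unique:
  assumes T: "0 < T" "T < Tm" and v: "hutchinson_sol \<tau> \<mu> T v"
  shows "\<forall>t\<in>{-\<tau>..T}. v t = u t"
proof -
  have vc: "continuous_on {-\<tau>..T} v" and v0: "\<And>t. t \<in> {-\<tau>..0} \<Longrightarrow> v t = \<mu>"
    and vd: "\<And>t. t \<in> {0<..T} \<Longrightarrow> (v has_real_derivative (v t * (1 - v (t - \<tau>)) / 2)) (at t within {-\<tau>..T})"
    using v unfolding hutchinson_sol_def by auto
  have main: "\<forall>t. -\<tau> \<le> t \<and> t \<le> T \<and> t \<le> real k * \<tau> \<longrightarrow> v t = u t" for k
  proof (induction k)
    case 0 then show ?case using v0 u_le0 by auto
  next
    case (Suc k)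
    show ?case
    proof (intro allI impI)
      fix t assume t: "-\<tau> \<le> t \<and> t \<le> T \<and> t \<le> real (Suc k) * \<tau>"
      show "v t = u t"
      proof (cases "t \<le> real k * \<tau>")
        case True then show ?thesis using Suc.IH t by auto
      next
        case False
        define a where "a = real k * \<tau>"
        have a0: "0 \<le> a" using tau_pos by (simp add: a_def)
        have at: "a < t" using False by (simp add: a_def)
        have "-\<tau> \<le> a" using a0 tau_pos by simp
        then have va: "v a = u a" using Suc.IH[rule_format, of a] at t by (simp add: a_def)
        obtain M where M: "M \<ge> 0" "\<And>x. x \<in> {a - \<tau>..t - \<tau>} \<Longrightarrow> norm (u x) \<le> M"
          using continuous_on_compact_bound[of "{a - \<tau>..t - \<tau>}" u] continuous_on_subset[OF u_cont] by auto
        define h where "h = (\<lambda>s. (v s - u s)^2 * exp (- (2 * (1 + M)) * s))"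
        have "h t \<le> h a"
        proof (rule DERIV_nonpos_imp_decreasing_open[of a t h])
          show "a \<le> t" using at by simp
          show "continuous_on {a..t} h" unfolding h_def
            using a0 t tau_pos
            by (intro continuous_intros continuous_on_subset[OF vc] continuous_on_subset[OF u_cont]) auto
          fix s assume s: "a < s" "s < t"
          then have s0: "0 < s" "s < T" using a0 t by auto
          have ivs: "s \<in> interior {-\<tau>..T}" using s0 tau_pos by auto
          have dv: "(v has_real_derivative (v s * (1 - v (s - \<tau>)) / 2)) (at s)"
            using vd[of s] s0 at_within_interior[OF ivs] by auto
          have vu: "v (s - \<tau>) = u (s - \<tau>)"
          proof -
            have "-\<tau> \<le> s - \<tau>" "s - \<tau> \<le> T" "s - \<tau> \<le> real k * \<tau>"
              using s s0 a0 t tau_pos by (auto simp: a_def algebra_simps)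
            then show ?thesis using Suc.IH by blast
          qed
          have du: "(u has_real_derivative u s * (1 - u (s - \<tau>)) / 2) (at s)"
            using u_deriv s0 T by auto
          define \<alpha> where "\<alpha> = (1 - u (s - \<tau>)) / 2"
          have "\<bar>u (s - \<tau>)\<bar> \<le> M" using M(2)[of "s - \<tau>"] s by auto
          then have al: "\<alpha> \<le> 1 + M" unfolding \<alpha>_def by auto
          have "(h has_real_derivative
              2 * (v s - u s) * (v s * \<alpha> - u s * \<alpha>) * exp (- (2 * (1 + M)) * s)
              + (v s - u s)^2 * (exp (- (2 * (1 + M)) * s) * (- (2 * (1 + M))))) (at s)"
            unfolding h_def using dv du vu
            by (auto intro!: derivative_eq_intros simp: \<alpha>_def)
          moreover have "2 * (v s - u s) * (v s * \<alpha> - u s * \<alpha>) * exp (- (2 * (1 + M)) * s)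
              + (v s - u s)^2 * (exp (- (2 * (1 + M)) * s) * (- (2 * (1 + M))))
              = 2 * (v s - u s)^2 * exp (- (2 * (1 + M)) * s) * (\<alpha> - (1 + M))"
            by (simp add: algebra_simps power2_eq_square)
          moreover have "2 * (v s - u s)^2 * exp (- (2 * (1 + M)) * s) * (\<alpha> - (1 + M)) \<le> 0"
            using al by (intro mult_nonneg_nonpos) auto
          ultimately show "\<exists>y. (h has_real_derivative y) (at s) \<and> y \<le> 0" by auto
        qed
        moreover have "h a = 0" using va by (simp add: h_def)
        moreover have "h t \<ge> 0" by (simp add: h_def)
        ultimately have "h t = 0" by simp
        then show ?thesis by (simp add: h_def)
      qed
    qed
  qed
  then show ?thesis
  proof (intro ballI)
    fix t assume t: "t \<in> {-\<tau>..T}"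
    define n where "n = nat \<lceil>\<bar>t\<bar> / \<tau>\<rceil>"
    have "\<bar>t\<bar> / \<tau> \<le> real n" unfolding n_def by linarith
    then have "\<bar>t\<bar> \<le> real n * \<tau>" using tau_pos by (simp add: field_simps)
    then have "t \<le> real n * \<tau>" by linarith
    then show "v t = u t" using main[of n] t by auto
  qed
qed

end

context hsol begin

lemma bound_exists: "\<exists>B\<ge>1. \<bar>\<mu>\<bar> \<le> B \<and> (\<forall>t\<le>T1. \<bar>u t\<bar> \<le> B)"
proof -
  obtain M where M: "M \<ge> 0" "\<And>x. x \<in> {0..max 0 T1} \<Longrightarrow> norm (u x) \<le> M"
    using continuous_on_compact_bound[of "{0..max 0 T1}" u] continuous_on_subset[OF u_cont] by auto
  define B where "B = max 1 (max \<bar>\<mu>\<bar> M)"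
  have "\<forall>t\<le>T1. \<bar>u t\<bar> \<le> B"
  proof (intro allI impI)
    fix t assume "t \<le> T1"
    show "\<bar>u t\<bar> \<le> B"
    proof (cases "t \<le> 0")
      case True then show ?thesis by (simp add: u_le0 B_def)
    next
      case False then show ?thesis using M(2)[of t] \<open>t \<le> T1\<close> by (auto simp: B_def)
    qed
  qed
  moreover have "B \<ge> 1" "\<bar>\<mu>\<bar> \<le> B" by (auto simp: B_def)
  ultimately show ?thesis by blast
qed

lemma lipschitz_le:
  assumes T1: "T1 < Tm" and B: "B \<ge> 0" "\<forall>t\<le>T1. \<bar>u t\<bar> \<le> B"
    and st: "s \<le> t" "t \<le> T1"
  shows "\<bar>u t - u s\<bar> \<le> (B * (1 + B) / 2) * (t - s)"
proof (cases "t \<le> 0")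
  case True then show ?thesis using st B by (simp add: u_le0)
next
  case False
  note t0 = this
  define s' where "s' = max 0 s"
  have us: "u s = u s'" using u_le0[of s] u_le0[of 0] by (auto simp: s'_def max_def)
  have "\<bar>u t - u s'\<bar> \<le> (B * (1 + B) / 2) * (t - s')"
  proof (cases "s' < t")
    case False then have "s' = t" using st t0 by (auto simp: s'_def)
    then show ?thesis by simp
  next
    case True
    have dif: "u differentiable (at x)" if "s' < x" "x < t" for x
    proof -
      have "0 < x" "x < Tm" using that st T1 by (auto simp: s'_def)
      then show ?thesis using u_deriv[of x] real_differentiable_def by blast
    qed
    obtain l z where z: "s' < z" "z < t" "DERIV u z :> l" "u t - u s' = (t - s') * l"
      using MVT[OF True continuous_on_subset[OF u_cont subset_UNIV] dif] by blast
    have "DERIV u z :> u z * (1 - u (z - \<tau>)) / 2" using u_deriv z st T1 by (auto simp: s'_def)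
    then have l: "l = u z * (1 - u (z - \<tau>)) / 2" using z DERIV_unique by blast
    have "\<bar>u z\<bar> \<le> B" "\<bar>u (z - \<tau>)\<bar> \<le> B" using B z st tau_pos by auto
    then have "\<bar>u z * (1 - u (z - \<tau>))\<bar> \<le> B * (1 + B)"
      unfolding abs_mult by (intro mult_mono) (auto simp: B)
    then have "\<bar>l\<bar> \<le> B * (1 + B) / 2" using l by simp
    then show ?thesis using z True
      by (simp add: abs_mult mult_right_mono mult.commute)
  qed
  moreover have "t - s' \<le> t - s" by (simp add: s'_def)
  moreover have "0 \<le> B * (1 + B) / 2" using B by simp
  ultimately show ?thesis using us
    by (metis mult_left_mono order_trans)
qed

lemma lipschitz:
  assumes T1: "T1 < Tm" and B: "B \<ge> 0" "\<forall>t\<le>T1. \<bar>u t\<bar> \<le> B"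
    and st: "s \<le> T1" "t \<le> T1"
  shows "\<bar>u t - u s\<bar> \<le> (B * (1 + B) / 2) * \<bar>t - s\<bar>"
proof (cases "s \<le> t")
  case True then show ?thesis using lipschitz_le[OF T1 B True st(2)] by simp
next
  case False then show ?thesis using lipschitz_le[OF T1 B _ st(1), of t] by (simp add: abs_minus_commute)
qed

lemma euler:
  assumes T1: "T1 < Tm" and B: "B \<ge> 0" "\<forall>t\<le>T1. \<bar>u t\<bar> \<le> B"
    and th: "0 \<le> t" "0 \<le> h" "t + h \<le> T1"
  shows "\<bar>u (t + h) - u t - h * (u t * (1 - u (t - \<tau>)) / 2)\<bar> \<le> (B * (1 + B) / 2) * (1 + 2 * B) / 2 * h^2"
proof (cases "h = 0")
  case True then show ?thesis by simp
next
  case False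
  define \<Lambda> where "\<Lambda> = B * (1 + B) / 2"
  have \<Lambda>0: "\<Lambda> \<ge> 0" using B by (simp add: \<Lambda>_def)
  have lt: "t < t + h" using False th by simp
  have dif: "u differentiable (at x)" if "t < x" "x < t + h" for x
  proof -
    have "0 < x" "x < Tm" using that th T1 by auto
    then show ?thesis using u_deriv[of x] real_differentiable_def by blast
  qed
  obtain l z where z: "t < z" "z < t + h" "DERIV u z :> l" "u (t + h) - u t = (t + h - t) * l"
    using MVT[OF lt continuous_on_subset[OF u_cont subset_UNIV] dif] by blast
  have "DERIV u z :> u z * (1 - u (z - \<tau>)) / 2" using u_deriv z th T1 by auto
  then have l: "l = u z * (1 - u (z - \<tau>)) / 2" using z DERIV_unique by blast
  have L1: "\<bar>u z - u t\<bar> \<le> \<Lambda> * \<bar>z - t\<bar>" unfolding \<Lambda>_def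
    by (rule lipschitz[OF T1 B]) (use z th in auto)
  have L2: "\<bar>u (t - \<tau>) - u (z - \<tau>)\<bar> \<le> \<Lambda> * \<bar>(t - \<tau>) - (z - \<tau>)\<bar>" unfolding \<Lambda>_def
    by (rule lipschitz[OF T1 B]) (use z th tau_pos in auto)
  have "z - \<tau> \<le> T1" using z th tau_pos by auto
  then have "\<bar>u (z - \<tau>)\<bar> \<le> B" using B(2) by blast
  then have b1: "\<bar>1 - u (z - \<tau>)\<bar> \<le> 1 + B" by linarith
  have b2: "\<bar>u t\<bar> \<le> B" using B th by auto
  have "l - u t * (1 - u (t - \<tau>)) / 2 = ((u z - u t) * (1 - u (z - \<tau>)) + u t * (u (t - \<tau>) - u (z - \<tau>))) / 2"
    using l by (simp add: field_simps)
  note eq = this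
  have "\<bar>l - u t * (1 - u (t - \<tau>)) / 2\<bar> = \<bar>(u z - u t) * (1 - u (z - \<tau>)) + u t * (u (t - \<tau>) - u (z - \<tau>))\<bar> / 2"
    by (simp only: eq abs_divide)
  also have "\<dots> \<le> (\<bar>(u z - u t) * (1 - u (z - \<tau>))\<bar> + \<bar>u t * (u (t - \<tau>) - u (z - \<tau>))\<bar>) / 2"
    by (intro divide_right_mono abs_triangle_ineq) simp
  also have "\<dots> = (\<bar>u z - u t\<bar> * \<bar>1 - u (z - \<tau>)\<bar> + \<bar>u t\<bar> * \<bar>u (t - \<tau>) - u (z - \<tau>)\<bar>) / 2"
    by (simp add: abs_mult)
  also have "\<dots> \<le> (\<Lambda> * h * (1 + B) + B * (\<Lambda> * h)) / 2"
  proof -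
    have "\<bar>z - t\<bar> \<le> h" "\<bar>(t - \<tau>) - (z - \<tau>)\<bar> \<le> h" using z by auto
    then have "\<bar>u z - u t\<bar> \<le> \<Lambda> * h" "\<bar>u (t - \<tau>) - u (z - \<tau>)\<bar> \<le> \<Lambda> * h"
      using L1 L2 \<Lambda>0 by (meson mult_left_mono order_trans)+
    then show ?thesis using b1 b2 B
      by (intro divide_right_mono add_mono mult_mono) auto
  qed
  also have "\<dots> = \<Lambda> * (1 + 2 * B) / 2 * h" by (simp add: algebra_simps)
  finally have dl: "\<bar>l - u t * (1 - u (t - \<tau>)) / 2\<bar> \<le> \<Lambda> * (1 + 2 * B) / 2 * h" .
  have "u (t + h) - u t - h * (u t * (1 - u (t - \<tau>)) / 2) = h * (l - u t * (1 - u (t - \<tau>)) / 2)"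
    using z(4) by (simp add: algebra_simps)
  then have "\<bar>u (t + h) - u t - h * (u t * (1 - u (t - \<tau>)) / 2)\<bar> = h * \<bar>l - u t * (1 - u (t - \<tau>)) / 2\<bar>"
    using th by (simp add: abs_mult)
  also have "\<dots> \<le> h * (\<Lambda> * (1 + 2 * B) / 2 * h)" using th by (intro mult_left_mono[OF dl]) simp
  finally show ?thesis by (simp add: \<Lambda>_def power2_eq_square algebra_simps)
qed

end

lemma xi_past:
  "j \<le> 0 \<Longrightarrow> xi \<tau> \<mu> N \<omega> n j = (if 0 \<le> int n + j then xi \<tau> \<mu> N \<omega> (nat (int n + j)) 0 else \<mu> * real N)"
proof (induction n arbitrary: j)
  case 0 then show ?case by auto
next
  case (Suc n)
  show ?case
  proof (cases "j = 0")
    case True then show ?thesis by (simp only: add_0_right nat_int of_nat_0_le_iff if_True)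
  next
    case False
    then have j: "j < 0" using Suc.prems by simp
    have "xi \<tau> \<mu> N \<omega> (Suc n) j = xi \<tau> \<mu> N \<omega> n (j + 1)"
      using j by (simp add: theta_plus_def theta_minus_def)
    also have "\<dots> = (if 0 \<le> int n + (j + 1) then xi \<tau> \<mu> N \<omega> (nat (int n + (j + 1))) 0 else \<mu> * real N)"
      using Suc.IH[of "j + 1"] j by simp
    finally show ?thesis by (simp add: algebra_simps)
  qed
qed

lemma xi_rec0:
  "xi \<tau> \<mu> N \<omega> (Suc k) 0 = (if fst (\<omega> k) then xi \<tau> \<mu> N \<omega> k 0 * (1 + 1 / real N)
     else max (xi \<tau> \<mu> N \<omega> k 0 * (1 - xi \<tau> \<mu> N \<omega> k (- int (L_of \<tau> N)) / (real N)^2)) 0)"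
  by (simp add: theta_plus_def theta_minus_def)

lemma geom_sum: "(\<Sum>k<n. x * (1 + x)^k) = (1 + x)^n - (1::real)"
  by (induction n) (auto simp: algebra_simps)

lemma abel_sum:
  fixes e c :: "nat \<Rightarrow> real"
  shows "(\<Sum>k<Suc n. e k * c k) = (\<Sum>j<Suc n. e j) * c n - (\<Sum>k<n. (\<Sum>j<Suc k. e j) * (c (Suc k) - c k))"
proof (induction n)
  case 0 then show ?case by simp
next
  case (Suc n)
  have "(\<Sum>k<Suc (Suc n). e k * c k) = (\<Sum>k<Suc n. e k * c k) + e (Suc n) * c (Suc n)" by simp
  also have "\<dots> = (\<Sum>j<Suc n. e j) * c n - (\<Sum>k<n. (\<Sum>j<Suc k. e j) * (c (Suc k) - c k)) + e (Suc n) * c (Suc n)"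
    using Suc by simp
  also have "\<dots> = (\<Sum>j<Suc (Suc n). e j) * c (Suc n) - (\<Sum>k<Suc n. (\<Sum>j<Suc k. e j) * (c (Suc k) - c k))"
    by (simp add: algebra_simps)
  finally show ?case .
qed

lemma pow_le_exp: "0 \<le> x \<Longrightarrow> (1 + x) ^ j \<le> exp (x * real j)"
proof -
  assume x: "0 \<le> x"
  have "(1 + x) ^ j \<le> (exp x) ^ j"
    by (intro power_mono) (use x exp_ge_add_one_self[of x] in auto)
  also have "\<dots> = exp (x * real j)" by (simp add: exp_of_nat_mult[symmetric] mult.commute)
  finally show ?thesis .
qed

locale dchain =
  fixes \<mu> \<tau> :: real and N L M :: nat and b :: "nat \<Rightarrow> bool" and z w :: "nat \<Rightarrow> real"
    and u :: "real \<Rightarrow> real" and B \<Lambda> K T1 \<delta> \<rho> :: real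
  assumes Npos: "N > 0" and tau_pos: "\<tau> > 0"
    and mu_pos: "\<mu> > 0"
    and z0: "z 0 = \<mu>"
    and w_def: "\<And>k. w k = (if L \<le> k then z (k - L) else \<mu>)"
    and zrec: "\<And>k. z (Suc k) = (if b k then z k * (1 + 1 / real N) else max (z k * (1 - w k / real N)) 0)"
    and Lb1: "real L \<le> \<tau> * real N" and Lb2: "\<tau> * real N < real L + 1"
    and u0: "\<And>t. t \<le> 0 \<Longrightarrow> u t = \<mu>"
    and ubd: "\<And>t. t \<le> T1 \<Longrightarrow> \<bar>u t\<bar> \<le> B"
    and ulip: "\<And>s t. s \<le> T1 \<Longrightarrow> t \<le> T1 \<Longrightarrow> \<bar>u t - u s\<bar> \<le> \<Lambda> * \<bar>t - s\<bar>"
    and ueul: "\<And>t h. 0 \<le> t \<Longrightarrow> 0 \<le> h \<Longrightarrow> t + h \<le> T1 \<Longrightarrow>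
        \<bar>u (t + h) - u t - h * (u t * (1 - u (t - \<tau>)) / 2)\<bar> \<le> K * h^2"
    and B1: "B \<ge> 1" and Lam0: "\<Lambda> \<ge> 0" and K0: "K \<ge> 0" and delta0: "\<delta> \<ge> 0" and T10: "T1 \<ge> 0"
    and NB: "B + 1 \<le> real N"
    and MT: "real M \<le> T1 * real N"
    and Sbd: "\<And>k. k \<le> M \<Longrightarrow> \<bar>\<Sum>j<k. (if b j then 1 else -1::real)\<bar> \<le> \<delta> * real N"
    and rho_def: "\<rho> = T1 * (K + B * \<Lambda> / 2) / real N
        + \<delta> * ((B + 1) * (B + 2) + T1 * ((B + 1) * (B + 2) * (2 * B + 3))) / 2"
    and small: "\<rho> * exp ((B + 1) * T1) \<le> 1"
begin

abbreviation "eps j \<equiv> (if b j then 1 else -1::real)"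
abbreviation "S k \<equiv> (\<Sum>j<k. eps j)"
abbreviation "C \<equiv> B + 1"
abbreviation "e j \<equiv> z j - u (real j / real N)"
abbreviation "cc k \<equiv> z k * (1 + w k)"

lemma NN: "real N > 0" using Npos by simp

lemma z_nonneg: "z k \<ge> 0"
proof (induction k)
  case 0 then show ?case using z0 mu_pos by simp
next
  case (Suc k) then show ?case by (simp add: zrec)
qed

lemma mu_le: "\<mu> \<le> B"
  using ubd[of 0] u0[of 0] T10 by simp

lemma rho_nonneg: "\<rho> \<ge> 0"
  unfolding rho_def using B1 Lam0 K0 delta0 T10 NN by (intro add_nonneg_nonneg mult_nonneg_nonneg divide_nonneg_nonneg) auto

lemma pow_bound: "j \<le> M \<Longrightarrow> (1 + C / real N) ^ j \<le> exp (C * T1)"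
proof -
  assume j: "j \<le> M"
  have "(1 + C / real N) ^ j \<le> exp (C / real N * real j)"
    by (rule pow_le_exp) (use B1 NN in simp)
  also have "\<dots> \<le> exp (C * T1)"
  proof -
    have "real j \<le> T1 * real N" using j MT by linarith
    then have "real j / real N \<le> T1" using NN by (simp add: divide_le_eq)
    then have "C * (real j / real N) \<le> C * T1" using B1 by (intro mult_left_mono) auto
    then show ?thesis by simp
  qed
  finally show ?thesis .
qed

lemma step:
  assumes n: "Suc n \<le> M" and IH: "\<forall>j\<le>n. \<bar>e j\<bar> \<le> \<rho> * (1 + C / real N) ^ j"
  shows "\<bar>e (Suc n)\<bar> \<le> \<rho> * (1 + C / real N) ^ Suc n"
proof -
  have jT: "real j / real N \<le> T1" if "j \<le> M" for j
  proof -
    have "real j \<le> T1 * real N" using that MT by linarith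
    then show ?thesis using NN by (simp add: divide_le_eq)
  qed
  have eb: "\<bar>e j\<bar> \<le> 1" if "j \<le> n" for j
  proof -
    have "\<bar>e j\<bar> \<le> \<rho> * (1 + C / real N) ^ j" using IH that by auto
    also have "\<dots> \<le> \<rho> * exp (C * T1)" using pow_bound[of j] that n rho_nonneg
      by (intro mult_left_mono) auto
    finally show ?thesis using small by (simp add: mult.commute)
  qed
  have zb: "z j \<le> B + 1" if "j \<le> n" for j
  proof -
    have "\<bar>u (real j / real N)\<bar> \<le> B" using ubd jT[of j] that n by auto
    then show ?thesis using eb[OF that] by linarith
  qed
  have wb: "0 \<le> w j \<and> w j \<le> B + 1" if "j \<le> n" for j
    using zb[of "j - L"] that z_nonneg[of "j - L"] mu_le mu_pos by (auto simp: w_def)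
  have inc: "z (Suc k) - z k = z k * (1 - w k) / (2 * real N) + eps k * cc k / (2 * real N)" if "k \<le> n" for k
  proof (cases "b k")
    case True then show ?thesis using NN by (simp add: zrec field_simps)
  next
    case False
    have "w k / real N \<le> 1" using wb[OF that] NB NN by (simp add: divide_le_eq)
    then have "z k * (1 - w k / real N) \<ge> 0" using z_nonneg[of k] by simp
    then show ?thesis using False NN by (simp add: zrec field_simps)
  qed
  have dz: "\<bar>z (Suc k) - z k\<bar> \<le> (B + 1) * (B + 2) / real N" if "k \<le> n" for k
  proof (cases "b k")
    case True
    then have "\<bar>z (Suc k) - z k\<bar> = z k / real N" using NN z_nonneg[of k] by (simp add: zrec field_simps)
    also have "\<dots> \<le> (B + 1) * (B + 2) / real N" using zb[OF that] B1 NN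
      by (intro divide_right_mono) (auto intro: order_trans[of _ "B + 1"] simp: algebra_simps)
    finally show ?thesis .
  next
    case False
    have "\<bar>z (Suc k) - z k\<bar> = \<bar>z k * (1 - w k) / (2 * real N) + eps k * cc k / (2 * real N)\<bar>"
      using inc[OF that] by simp
    also have "\<dots> = z k * w k / real N" using False z_nonneg[of k] wb[OF that] NN
      by (simp add: field_simps)
    also have "\<dots> \<le> (B + 1) * (B + 2) / real N"
      using zb[OF that] wb[OF that] B1 NN z_nonneg[of k]
      by (intro divide_right_mono mult_mono) auto
    finally show ?thesis .
  qed
  have dw: "\<bar>w (Suc k) - w k\<bar> \<le> (B + 1) * (B + 2) / real N" if "k < n" for k
  proof -
    consider "Suc k < L" | "Suc k = L" | "L \<le> k" by linarith
    then show ?thesis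
    proof cases
      case 1 then show ?thesis using B1 NN by (simp add: w_def)
    next
      case 2 then show ?thesis using B1 NN z0 by (simp add: w_def)
    next
      case 3
      then have "w (Suc k) - w k = z (Suc (k - L)) - z (k - L)" by (simp add: w_def Suc_diff_le)
      then show ?thesis using dz[of "k - L"] that by simp
    qed
  qed
  define G where "G = (B + 1) * (B + 2) * (2 * B + 3)"
  have dc: "\<bar>cc (Suc k) - cc k\<bar> \<le> G / real N" if "k < n" for k
  proof -
    have "cc (Suc k) - cc k = (z (Suc k) - z k) * (1 + w (Suc k)) + z k * (w (Suc k) - w k)"
      by (simp add: algebra_simps)
    then have "\<bar>cc (Suc k) - cc k\<bar> \<le> \<bar>z (Suc k) - z k\<bar> * \<bar>1 + w (Suc k)\<bar> + \<bar>z k\<bar> * \<bar>w (Suc k) - w k\<bar>"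
      by (metis abs_mult abs_triangle_ineq)
    also have "\<dots> \<le> ((B + 1) * (B + 2) / real N) * (B + 2) + (B + 1) * ((B + 1) * (B + 2) / real N)"
    proof (intro add_mono mult_mono)
      show "\<bar>z (Suc k) - z k\<bar> \<le> (B + 1) * (B + 2) / real N" using dz that by simp
      show "\<bar>1 + w (Suc k)\<bar> \<le> B + 2" using wb[of "Suc k"] that by auto
      show "\<bar>z k\<bar> \<le> B + 1" using zb[of k] z_nonneg[of k] that by auto
      show "\<bar>w (Suc k) - w k\<bar> \<le> (B + 1) * (B + 2) / real N" using dw that by simp
    qed (use B1 NN in auto)
    also have "\<dots> = ((B + 1) * (B + 2) * (B + 2) + (B + 1) * ((B + 1) * (B + 2))) / real N"
      using NN by (simp add: field_simps)
    also have "\<dots> = G / real N" by (simp add: G_def algebra_simps)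
    finally show ?thesis .
  qed
  have cb: "\<bar>cc k\<bar> \<le> (B + 1) * (B + 2)" if "k \<le> n" for k
    using zb[OF that] wb[OF that] z_nonneg[of k] B1 unfolding abs_mult
    by (intro mult_mono) auto
  have mart: "\<bar>\<Sum>k<Suc n. eps k * cc k\<bar> \<le> \<delta> * real N * ((B + 1) * (B + 2) + T1 * G)"
  proof -
    have "\<bar>\<Sum>k<Suc n. eps k * cc k\<bar> = \<bar>S (Suc n) * cc n - (\<Sum>k<n. S (Suc k) * (cc (Suc k) - cc k))\<bar>"
      using abel_sum[of eps cc n] by simp
    also have "\<dots> \<le> \<bar>S (Suc n)\<bar> * \<bar>cc n\<bar> + (\<Sum>k<n. \<bar>S (Suc k)\<bar> * \<bar>cc (Suc k) - cc k\<bar>)"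
      by (metis (no_types, lifting) abs_mult abs_triangle_ineq4 add_mono order_refl order_trans sum_abs sum.cong)
    also have "\<dots> \<le> (\<delta> * real N) * ((B + 1) * (B + 2)) + (\<Sum>k<n. (\<delta> * real N) * (G / real N))"
    proof (intro add_mono sum_mono mult_mono)
      show "\<bar>S (Suc n)\<bar> \<le> \<delta> * real N" by (rule Sbd[OF n])
      show "\<bar>cc n\<bar> \<le> (B + 1) * (B + 2)" using cb by simp
      fix k assume k: "k \<in> {..<n}"
      show "\<bar>S (Suc k)\<bar> \<le> \<delta> * real N" by (rule Sbd) (use k n in simp)
      show "\<bar>cc (Suc k) - cc k\<bar> \<le> G / real N" using dc k by simp
    qed (use delta0 NN B1 in \<open>auto simp: G_def\<close>)
    also have "\<dots> = \<delta> * real N * ((B + 1) * (B + 2)) + real n * \<delta> * G" using NN by simp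
    also have "\<dots> \<le> \<delta> * real N * ((B + 1) * (B + 2)) + (T1 * real N) * \<delta> * G"
    proof -
      have "real n \<le> T1 * real N" using n MT by linarith
      then show ?thesis using delta0 B1 by (intro add_left_mono mult_right_mono) (auto simp: G_def)
    qed
    also have "\<dots> = \<delta> * real N * ((B + 1) * (B + 2) + T1 * G)" by (simp add: algebra_simps)
    finally show ?thesis .
  qed
  define X where "X = 1 + C / real N"
  have X1: "X \<ge> 1" using B1 NN by (simp add: X_def)
  define v where "v k = u (real k / real N)" for k
  define a where "a k = u (real k / real N - \<tau>)" for k
  define r where "r k = v (Suc k) - v k - (1 / real N) * (v k * (1 - a k) / 2)" for k
  have eul: "\<bar>r k\<bar> \<le> K / (real N)^2" if "k \<le> n" for k
  proof -
    have eq: "real k / real N + 1 / real N = real (Suc k) / real N" using NN by (simp add: field_simps)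
    have "real (Suc k) / real N \<le> T1" using jT[of "Suc k"] that n by simp
    then have "\<bar>u (real k / real N + 1 / real N) - u (real k / real N) - 1 / real N * (u (real k / real N) * (1 - u (real k / real N - \<tau>)) / 2)\<bar> \<le> K * (1 / real N)^2"
      using NN eq by (intro ueul) auto
    then show ?thesis unfolding r_def v_def a_def eq by (simp add: power_divide)
  qed
  have IHX: "\<bar>e j\<bar> \<le> \<rho> * X ^ k" if "j \<le> k" "k \<le> n" for j k
  proof -
    have "\<bar>e j\<bar> \<le> \<rho> * X ^ j" using IH that by (auto simp: X_def)
    also have "\<dots> \<le> \<rho> * X ^ k" using X1 rho_nonneg that by (intro mult_left_mono power_increasing) auto
    finally show ?thesis .
  qed
  have p1: "\<bar>z k * (1 - w k) - v k * (1 - a k)\<bar> \<le> 2 * C * \<rho> * X ^ k + B * \<Lambda> / real N" if "k \<le> n" for k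
  proof -
    have aw: "\<bar>a k - w k\<bar> \<le> \<rho> * X ^ k + \<Lambda> / real N"
    proof (cases "L \<le> k")
      case False
      then have "real k < \<tau> * real N" using Lb1 by linarith
      then have "real k / real N - \<tau> \<le> 0" using NN by (simp add: field_simps)
      then have "a k = \<mu>" by (simp add: a_def u0)
      then show ?thesis using False rho_nonneg X1 Lam0 NN by (simp add: w_def)
    next
      case True
      have "\<bar>a k - w k\<bar> \<le> \<bar>u (real (k - L) / real N) - z (k - L)\<bar> + \<bar>a k - u (real (k - L) / real N)\<bar>"
        using True by (simp add: w_def)
      also have "\<dots> \<le> \<rho> * X ^ k + \<Lambda> / real N"
      proof (intro add_mono)
        show "\<bar>u (real (k - L) / real N) - z (k - L)\<bar> \<le> \<rho> * X ^ k"
          using IHX[of "k - L" k] that by (simp add: abs_minus_commute)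
        have "\<bar>a k - u (real (k - L) / real N)\<bar> \<le> \<Lambda> * \<bar>(real k / real N - \<tau>) - real (k - L) / real N\<bar>"
          unfolding a_def
          by (rule ulip) (use jT[of "k - L"] jT[of k] that n T10 tau_pos in auto)
        also have "\<dots> \<le> \<Lambda> * (1 / real N)"
        proof (intro mult_left_mono Lam0)
          have "(real k / real N - \<tau>) - real (k - L) / real N = real L / real N - \<tau>"
            using True NN by (simp add: field_simps of_nat_diff)
          moreover have "real L / real N \<le> \<tau>" "\<tau> < real L / real N + 1 / real N"
            using Lb1 Lb2 NN by (simp_all add: field_simps)
          ultimately show "\<bar>(real k / real N - \<tau>) - real (k - L) / real N\<bar> \<le> 1 / real N" by simp
        qed
        finally show "\<bar>a k - u (real (k - L) / real N)\<bar> \<le> \<Lambda> / real N" by simp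
      qed
      finally show ?thesis .
    qed
    have dec: "z k * (1 - w k) - v k * (1 - a k) = e k * (1 - w k) + v k * (a k - w k)"
      by (simp add: v_def algebra_simps)
    have "\<bar>z k * (1 - w k) - v k * (1 - a k)\<bar> \<le> \<bar>e k\<bar> * \<bar>1 - w k\<bar> + \<bar>v k\<bar> * \<bar>a k - w k\<bar>"
      unfolding dec by (metis abs_mult abs_triangle_ineq)
    also have "\<dots> \<le> (\<rho> * X ^ k) * (B + 1) + B * (\<rho> * X ^ k + \<Lambda> / real N)"
    proof (intro add_mono mult_mono)
      show "\<bar>e k\<bar> \<le> \<rho> * X ^ k" using IHX[of k k] that by simp
      show "\<bar>1 - w k\<bar> \<le> B + 1" using wb[OF that] B1 by auto
      show "\<bar>v k\<bar> \<le> B" unfolding v_def using ubd jT[of k] that n by auto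
      show "\<bar>a k - w k\<bar> \<le> \<rho> * X ^ k + \<Lambda> / real N" by (rule aw)
    qed (use rho_nonneg X1 B1 in auto)
    also have "\<dots> = (2 * B + 1) * \<rho> * X ^ k + B * \<Lambda> / real N" by (simp add: algebra_simps)
    also have "\<dots> \<le> 2 * C * \<rho> * X ^ k + B * \<Lambda> / real N"
      using rho_nonneg X1 by (intro add_right_mono mult_right_mono) auto
    finally show ?thesis .
  qed
  have v0: "v 0 = \<mu>" by (simp add: v_def u0)
  have termeq: "(z (Suc k) - z k) - (v (Suc k) - v k) =
      ((z k * (1 - w k) - v k * (1 - a k)) / (2 * real N) - r k) + eps k * cc k / (2 * real N)" if "k \<le> n" for k
  proof -
    have vinc: "v (Suc k) - v k = v k * (1 - a k) / (2 * real N) + r k" by (simp add: r_def)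
    have "(z k * (1 - w k) - v k * (1 - a k)) / (2 * real N) = z k * (1 - w k) / (2 * real N) - v k * (1 - a k) / (2 * real N)"
      by (rule diff_divide_distrib)
    then show ?thesis using inc[OF that] vinc by linarith
  qed
  have "e (Suc n) = (z (Suc n) - z 0) - (v (Suc n) - v 0)" using v0 by (simp add: z0 v_def)
  also have "\<dots> = (\<Sum>k<Suc n. (z (Suc k) - z k) - (v (Suc k) - v k))"
    by (subst sum_subtractf) (simp only: sum_lessThan_telescope)
  also have "\<dots> = (\<Sum>k<Suc n. (z k * (1 - w k) - v k * (1 - a k)) / (2 * real N) - r k) + (\<Sum>k<Suc n. eps k * cc k) / (2 * real N)"
  proof -
    have "(\<Sum>k<Suc n. (z (Suc k) - z k) - (v (Suc k) - v k)) = (\<Sum>k<Suc n. ((z k * (1 - w k) - v k * (1 - a k)) / (2 * real N) - r k) + eps k * cc k / (2 * real N))"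
      by (intro sum.cong refl termeq) simp
    also have "\<dots> = (\<Sum>k<Suc n. (z k * (1 - w k) - v k * (1 - a k)) / (2 * real N) - r k) + (\<Sum>k<Suc n. eps k * cc k) / (2 * real N)"
      by (simp only: sum.distrib sum_divide_distrib)
    finally show ?thesis .
  qed
  finally have eq: "e (Suc n) = \<dots>" .
  have "\<bar>e (Suc n)\<bar> \<le> (\<Sum>k<Suc n. \<bar>(z k * (1 - w k) - v k * (1 - a k)) / (2 * real N) - r k\<bar>) + \<bar>\<Sum>k<Suc n. eps k * cc k\<bar> / (2 * real N)"
  proof -
    have "\<bar>(\<Sum>k<Suc n. (z k * (1 - w k) - v k * (1 - a k)) / (2 * real N) - r k) + (\<Sum>k<Suc n. eps k * cc k) / (2 * real N)\<bar>
        \<le> \<bar>\<Sum>k<Suc n. (z k * (1 - w k) - v k * (1 - a k)) / (2 * real N) - r k\<bar> + \<bar>(\<Sum>k<Suc n. eps k * cc k) / (2 * real N)\<bar>"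
      by (rule abs_triangle_ineq)
    also have "\<bar>(\<Sum>k<Suc n. eps k * cc k) / (2 * real N)\<bar> = \<bar>\<Sum>k<Suc n. eps k * cc k\<bar> / (2 * real N)"
      using NN by (simp add: abs_divide)
    finally show ?thesis unfolding eq using sum_abs[of "\<lambda>k. (z k * (1 - w k) - v k * (1 - a k)) / (2 * real N) - r k" "{..<Suc n}"]
      by linarith
  qed
  also have "\<dots> \<le> (\<Sum>k<Suc n. C / real N * \<rho> * X ^ k + (B * \<Lambda> / 2 + K) / (real N)^2) + (\<delta> * real N * ((B + 1) * (B + 2) + T1 * G)) / (2 * real N)"
  proof (intro add_mono sum_mono divide_right_mono)
    fix k assume k: "k \<in> {..<Suc n}"
    then have kn: "k \<le> n" by simp
    have "\<bar>(z k * (1 - w k) - v k * (1 - a k)) / (2 * real N) - r k\<bar> \<le> \<bar>z k * (1 - w k) - v k * (1 - a k)\<bar> / (2 * real N) + \<bar>r k\<bar>"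
    proof -
      have "\<bar>(z k * (1 - w k) - v k * (1 - a k)) / (2 * real N)\<bar> = \<bar>z k * (1 - w k) - v k * (1 - a k)\<bar> / (2 * real N)"
        using NN by (simp add: abs_divide)
      then show ?thesis using abs_triangle_ineq4[of "(z k * (1 - w k) - v k * (1 - a k)) / (2 * real N)" "r k"] by linarith
    qed
    also have "\<dots> \<le> (2 * C * \<rho> * X ^ k + B * \<Lambda> / real N) / (2 * real N) + K / (real N)^2"
      using p1[OF kn] eul[OF kn] NN by (intro add_mono divide_right_mono) auto
    also have "\<dots> = C / real N * \<rho> * X ^ k + (B * \<Lambda> / 2 + K) / (real N)^2"
      using NN by (simp add: field_simps power2_eq_square)
    finally show "\<bar>(z k * (1 - w k) - v k * (1 - a k)) / (2 * real N) - r k\<bar> \<le> C / real N * \<rho> * X ^ k + (B * \<Lambda> / 2 + K) / (real N)^2" .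
  qed (use mart NN in auto)
  also have "\<dots> = \<rho> * (X ^ Suc n - 1) + real (Suc n) * (B * \<Lambda> / 2 + K) / (real N)^2 + \<delta> * ((B + 1) * (B + 2) + T1 * G) / 2"
  proof -
    have "(\<Sum>k<Suc n. C / real N * \<rho> * X ^ k) = \<rho> * (\<Sum>k<Suc n. C / real N * (1 + C / real N) ^ k)"
      by (simp add: sum_distrib_left X_def algebra_simps)
    also have "\<dots> = \<rho> * (X ^ Suc n - 1)" by (simp only: geom_sum X_def)
    finally show ?thesis using NN by (simp add: sum.distrib)
  qed
  also have "\<dots> \<le> \<rho> * (X ^ Suc n - 1) + T1 * (K + B * \<Lambda> / 2) / real N + \<delta> * ((B + 1) * (B + 2) + T1 * G) / 2"
  proof -
    have "real (Suc n) \<le> T1 * real N" using n MT by linarith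
    then have "real (Suc n) * (B * \<Lambda> / 2 + K) / (real N)^2 \<le> (T1 * real N) * (B * \<Lambda> / 2 + K) / (real N)^2"
      using B1 Lam0 K0 NN by (intro divide_right_mono mult_right_mono) auto
    also have "\<dots> = T1 * (K + B * \<Lambda> / 2) / real N" using NN by (simp add: power2_eq_square field_simps)
    finally show ?thesis by simp
  qed
  also have "\<dots> = \<rho> * X ^ Suc n"
  proof -
    have r: "T1 * (K + B * \<Lambda> / 2) / real N + \<delta> * ((B + 1) * (B + 2) + T1 * G) / 2 = \<rho>"
      by (simp add: rho_def G_def)
    show ?thesis using r by (simp only: right_diff_distrib mult_1_right)
  qed
  finally show ?thesis by (simp add: X_def)
qed
end

context dchain begin

lemma approx_all: "n \<le> M \<Longrightarrow> \<forall>j\<le>n. \<bar>e j\<bar> \<le> \<rho> * (1 + C / real N) ^ j"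
proof (induction n)
  case 0 then show ?case using z0 u0[of 0] rho_nonneg by simp
next
  case (Suc n)
  then have IH: "\<forall>j\<le>n. \<bar>e j\<bar> \<le> \<rho> * (1 + C / real N) ^ j" by simp
  have "\<bar>e (Suc n)\<bar> \<le> \<rho> * (1 + C / real N) ^ Suc n" by (rule step[OF Suc.prems IH])
  then show ?case using IH by (auto simp: le_Suc_eq)
qed

lemma approx: "n \<le> M \<Longrightarrow> \<bar>z n - u (real n / real N)\<bar> \<le> \<rho> * exp (C * T1)"
proof -
  assume n: "n \<le> M"
  have "\<bar>z n - u (real n / real N)\<bar> \<le> \<rho> * (1 + C / real N) ^ n" using approx_all[OF n] by simp
  also have "\<dots> \<le> \<rho> * exp (C * T1)" using pow_bound[OF n] rho_nonneg by (intro mult_left_mono) auto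
  finally show ?thesis .
qed

end

lemma jump_time_mono: "(\<forall>k. snd (\<omega> k) \<ge> 0) \<Longrightarrow> m \<le> n \<Longrightarrow> jump_time \<omega> m \<le> jump_time \<omega> n"
  unfolding jump_time_def by (intro sum_mono2) auto

lemma njumps_char:
  assumes pos: "\<forall>k. snd (\<omega> k) \<ge> 0" and s: "0 \<le> s" "s < jump_time \<omega> M"
  shows "njumps \<omega> s < M \<and> jump_time \<omega> (njumps \<omega> s) \<le> s \<and> s < jump_time \<omega> (Suc (njumps \<omega> s))"
proof -
  have M0: "M > 0" using s by (cases M) (auto simp: jump_time_def)
  have ex: "\<exists>n. s < jump_time \<omega> (Suc n)" using s M0 by (intro exI[of _ "M - 1"]) auto
  define m where "m = (LEAST n. s < jump_time \<omega> (Suc n))"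
  have m1: "s < jump_time \<omega> (Suc m)" unfolding m_def by (rule LeastI_ex[OF ex])
  have m2: "jump_time \<omega> (Suc n) \<le> s" if "n < m" for n
    using not_less_Least[of n "\<lambda>n. s < jump_time \<omega> (Suc n)"] that unfolding m_def by auto
  have m3: "jump_time \<omega> m \<le> s"
  proof (cases m)
    case 0 then show ?thesis using s by (simp add: jump_time_def)
  next
    case (Suc n) then show ?thesis using m2[of n] by simp
  qed
  have mM: "m < M"
  proof -
    have "m \<le> M - 1" unfolding m_def using s M0 by (intro Least_le) simp
    then show ?thesis using M0 by simp
  qed
  have "{n. 0 < n \<and> jump_time \<omega> n \<le> s} = {1..m}"
  proof (intro set_eqI iffI)
    fix n assume "n \<in> {n. 0 < n \<and> jump_time \<omega> n \<le> s}"
    then have n: "0 < n" "jump_time \<omega> n \<le> s" by auto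
    have "n \<le> m"
    proof (rule ccontr)
      assume "\<not> n \<le> m"
      then have "jump_time \<omega> (Suc m) \<le> jump_time \<omega> n" by (intro jump_time_mono[OF pos]) auto
      then show False using n m1 by simp
    qed
    then show "n \<in> {1..m}" using n by auto
  next
    fix n assume "n \<in> {1..m}"
    then have "jump_time \<omega> n \<le> jump_time \<omega> m" by (intro jump_time_mono[OF pos]) auto
    then show "n \<in> {n. 0 < n \<and> jump_time \<omega> n \<le> s}" using m3 \<open>n \<in> {1..m}\<close> by auto
  qed
  then have "njumps \<omega> s = m" by (simp add: njumps_def)
  then show ?thesis using m1 m3 mM by simp
qed

lemma skorokhod_le:
  assumes "a \<le> b" "0 \<le> c" "\<forall>t\<in>{a..b}. \<bar>x t - y t\<bar> \<le> c"
  shows "skorokhod_dist a b x y \<le> ereal c"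
proof -
  have idin: "(\<lambda>t. t) \<in> {l. strict_mono_on {a..b} l \<and> continuous_on {a..b} l \<and> l ` {a..b} = {a..b}}"
    by (auto simp: strict_mono_on_def)
  have "skorokhod_dist a b x y \<le> max (SUP t\<in>{a..b}. ereal \<bar>t - t\<bar>) (SUP t\<in>{a..b}. ereal \<bar>x t - y t\<bar>)"
    unfolding skorokhod_dist_def by (rule INF_lower2[OF idin]) simp
  also have "\<dots> \<le> ereal c"
  proof (rule max.boundedI)
    show "(SUP t\<in>{a..b}. ereal \<bar>t - t\<bar>) \<le> ereal c" using assms by (intro SUP_least) auto
    show "(SUP t\<in>{a..b}. ereal \<bar>x t - y t\<bar>) \<le> ereal c" using assms by (intro SUP_least) auto
  qed
  finally show ?thesis .
qed

lemma det_main: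
  fixes \<tau> \<mu> T T1 B \<Lambda> K \<delta> \<rho> :: real and N M :: nat and u :: "real \<Rightarrow> real" and \<omega> :: "nat \<Rightarrow> bool \<times> real"
  assumes tau: "\<tau> > 0" and mu: "\<mu> > 0" and T: "T > 0" and T1: "T1 = T + \<tau> + 1"
    and u0: "\<And>t. t \<le> 0 \<Longrightarrow> u t = \<mu>"
    and ubd: "\<And>t. t \<le> T1 \<Longrightarrow> \<bar>u t\<bar> \<le> B"
    and ulip: "\<And>s t. s \<le> T1 \<Longrightarrow> t \<le> T1 \<Longrightarrow> \<bar>u t - u s\<bar> \<le> \<Lambda> * \<bar>t - s\<bar>"
    and ueul: "\<And>t h. 0 \<le> t \<Longrightarrow> 0 \<le> h \<Longrightarrow> t + h \<le> T1 \<Longrightarrow>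
        \<bar>u (t + h) - u t - h * (u t * (1 - u (t - \<tau>)) / 2)\<bar> \<le> K * h^2"
    and B1: "B \<ge> 1" and Lam0: "\<Lambda> \<ge> 0" and K0: "K \<ge> 0" and delta0: "\<delta> \<ge> 0" and deltah: "\<delta> \<le> 1/2"
    and N3: "3 \<le> N" and NB: "B + 1 \<le> real N"
    and Mdef: "M = nat \<lfloor>T1 * real N\<rfloor>"
    and rho_def: "\<rho> = T1 * (K + B * \<Lambda> / 2) / real N
        + \<delta> * ((B + 1) * (B + 2) + T1 * ((B + 1) * (B + 2) * (2 * B + 3))) / 2"
    and small: "\<rho> * exp ((B + 1) * T1) \<le> 1"
    and g1: "\<forall>k. snd (\<omega> k) \<ge> 0"
    and g2: "\<forall>k\<le>M. \<bar>\<Sum>j<k. (if fst (\<omega> j) then 1 else -1::real)\<bar> \<le> \<delta> * real N"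
    and g3: "\<forall>n\<le>M. \<bar>jump_time \<omega> n - real n\<bar> \<le> \<delta> * real N"
  shows "\<forall>t\<in>{-\<tau>..T}. \<bar>Yproc \<tau> \<mu> N \<omega> t - u t\<bar> \<le> \<rho> * exp ((B + 1) * T1) + \<Lambda> * (\<delta> + 2 / real N)"
proof -
  define L where "L = L_of \<tau> N"
  define z where zdef: "z k = xi \<tau> \<mu> N \<omega> k 0 / real N" for k
  define w where wdef: "w k = xi \<tau> \<mu> N \<omega> k (- int L) / real N" for k
  have NN: "real N > 0" using N3 by simp
  have tN: "0 \<le> \<tau> * real N" using tau by simp
  have Lr: "real L = of_int \<lfloor>\<tau> * real N\<rfloor>" unfolding L_def L_of_def using tN by simp
  interpret dchain \<mu> \<tau> N L M "\<lambda>k. fst (\<omega> k)" z w u B \<Lambda> K T1 \<delta> \<rho>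
  proof
    show "0 < N" using N3 by simp
    show "0 < \<tau>" "0 < \<mu>" by (fact tau, fact mu)
    show "z 0 = \<mu>" using NN by (simp add: zdef)
    show "w k = (if L \<le> k then z (k - L) else \<mu>)" for k
    proof -
      have "xi \<tau> \<mu> N \<omega> k (- int L) = (if 0 \<le> int k + - int L then xi \<tau> \<mu> N \<omega> (nat (int k + - int L)) 0 else \<mu> * real N)"
        by (rule xi_past) simp
      moreover have "nat (int k + - int L) = k - L" by simp
      ultimately show ?thesis using NN by (auto simp: wdef zdef)
    qed
    show "z (Suc k) = (if fst (\<omega> k) then z k * (1 + 1 / real N) else max (z k * (1 - w k / real N)) 0)" for k
    proof -
      have "max (xi \<tau> \<mu> N \<omega> k 0 * (1 - xi \<tau> \<mu> N \<omega> k (- int L) / (real N)^2)) 0 / real N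
          = max (z k * (1 - w k / real N)) 0"
        using NN by (simp add: zdef wdef max_def field_simps power2_eq_square)
      then show ?thesis unfolding zdef[of "Suc k"] xi_rec0 L_def[symmetric] by (simp add: zdef)
    qed
    show "real L \<le> \<tau> * real N" "\<tau> * real N < real L + 1" using Lr by linarith+
    show "\<And>t. t \<le> 0 \<Longrightarrow> u t = \<mu>" by (fact u0)
    show "\<And>t. t \<le> T1 \<Longrightarrow> \<bar>u t\<bar> \<le> B" by (fact ubd)
    show "\<And>s t. s \<le> T1 \<Longrightarrow> t \<le> T1 \<Longrightarrow> \<bar>u t - u s\<bar> \<le> \<Lambda> * \<bar>t - s\<bar>" by (fact ulip)
    show "\<And>t h. 0 \<le> t \<Longrightarrow> 0 \<le> h \<Longrightarrow> t + h \<le> T1 \<Longrightarrow>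
        \<bar>u (t + h) - u t - h * (u t * (1 - u (t - \<tau>)) / 2)\<bar> \<le> K * h^2" by (fact ueul)
    show "1 \<le> B" "0 \<le> \<Lambda>" "0 \<le> K" "0 \<le> \<delta>" by (fact B1, fact Lam0, fact K0, fact delta0)
    show "0 \<le> T1" using T1 T tau by simp
    show "B + 1 \<le> real N" by (fact NB)
    show "real M \<le> T1 * real N" unfolding Mdef using T1 T tau by simp
    show "\<And>k. k \<le> M \<Longrightarrow> \<bar>\<Sum>j<k. if fst (\<omega> j) then 1 else - 1\<bar> \<le> \<delta> * real N" using g2 by auto
    show "\<rho> = T1 * (K + B * \<Lambda> / 2) / real N
        + \<delta> * ((B + 1) * (B + 2) + T1 * ((B + 1) * (B + 2) * (2 * B + 3))) / 2" by (fact rho_def)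
    show "\<rho> * exp ((B + 1) * T1) \<le> 1" by (fact small)
  qed
  define E where "E = \<rho> * exp ((B + 1) * T1)"
  have Mgt: "T1 * real N - 1 < real M" unfolding Mdef using T1 T tau by linarith
  have JM: "real N * (T + \<tau>) < jump_time \<omega> M"
  proof -
    have "real M - \<delta> * real N \<le> jump_time \<omega> M" using g3 by auto
    moreover have "\<delta> * real N \<le> real N / 2" using deltah NN by simp
    moreover have "real N * (T + \<tau>) + real N / 2 < real M"
      using Mgt T1 N3 by (simp add: algebra_simps)
    ultimately show ?thesis by linarith
  qed
  show ?thesis
  proof
    fix t assume t: "t \<in> {-\<tau>..T}"
    define s where "s = (if t < 0 then real N * (t + \<tau>) else real N * t)"
    have s0: "0 \<le> s" using t NN by (auto simp: s_def)
    have sJ: "s < jump_time \<omega> M"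
    proof -
      have "s \<le> real N * (T + \<tau>)" using t NN tau T by (auto simp: s_def intro!: mult_left_mono)
      then show ?thesis using JM by simp
    qed
    define m where "m = njumps \<omega> s"
    have mc: "m < M" "jump_time \<omega> m \<le> s" "s < jump_time \<omega> (Suc m)"
      using njumps_char[OF g1 s0 sJ] by (auto simp: m_def)
    have "\<bar>jump_time \<omega> m - real m\<bar> \<le> \<delta> * real N" using g3 mc(1) by simp
    then have ms1: "real m \<le> s + \<delta> * real N" using mc(2) by linarith
    have ms2: "s - \<delta> * real N < real m + 1"
    proof -
      have "\<bar>jump_time \<omega> (Suc m) - real (Suc m)\<bar> \<le> \<delta> * real N" using g3 mc(1) Suc_leI by blast
      then show ?thesis using mc(3) by simp
    qed
    have Yeq: "Yproc \<tau> \<mu> N \<omega> t = (if t < 0 then w m else z m)"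
      by (simp add: Yproc_def Xproc_def s_def m_def wdef zdef L_def)
    have mT1: "real m / real N \<le> T1"
    proof -
      have "real m \<le> T1 * real N" using mc unfolding Mdef using T1 T tau by linarith
      then show ?thesis using NN by (simp add: divide_le_eq)
    qed
    have Bnd: "\<bar>u (real m / real N) - u t\<bar> \<le> \<Lambda> * (\<delta> + 2 / real N)" if "0 \<le> t"
    proof -
      have "\<bar>u (real m / real N) - u t\<bar> \<le> \<Lambda> * \<bar>real m / real N - t\<bar>"
        using ulip[of t "real m / real N"] mT1 t T1 tau by auto
      also have "\<dots> \<le> \<Lambda> * (\<delta> + 2 / real N)"
      proof (intro mult_left_mono Lam0)
        have "\<bar>real m - real N * t\<bar> \<le> \<delta> * real N + 1" using ms1 ms2 that by (auto simp: s_def)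
        then have "\<bar>real m - real N * t\<bar> / real N \<le> (\<delta> * real N + 1) / real N" using NN by (simp add: divide_right_mono)
        moreover have "\<bar>real m / real N - t\<bar> = \<bar>real m - real N * t\<bar> / real N"
        proof -
          have "real m / real N - t = (real m - real N * t) / real N" using NN by (simp add: field_simps)
          then show ?thesis using NN by (simp add: abs_divide)
        qed
        moreover have "(\<delta> * real N + 1) / real N \<le> \<delta> + 2 / real N" using NN by (simp add: field_simps)
        ultimately show "\<bar>real m / real N - t\<bar> \<le> \<delta> + 2 / real N" by linarith
      qed
      finally show ?thesis .
    qed
    show "\<bar>Yproc \<tau> \<mu> N \<omega> t - u t\<bar> \<le> \<rho> * exp ((B + 1) * T1) + \<Lambda> * (\<delta> + 2 / real N)"
    proof (cases "t < 0")
      case False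
      have "\<bar>z m - u t\<bar> \<le> \<bar>z m - u (real m / real N)\<bar> + \<bar>u (real m / real N) - u t\<bar>" by linarith
      also have "\<dots> \<le> \<rho> * exp ((B + 1) * T1) + \<Lambda> * (\<delta> + 2 / real N)"
        using approx[of m] mc Bnd False by (intro add_mono) auto
      finally show ?thesis using Yeq False by simp
    next
      case True
      have ut: "u t = \<mu>" using True u0 by simp
      show ?thesis
      proof (cases "L \<le> m")
        case False
        then have "w m = \<mu>" using w_def by simp
        moreover have "0 \<le> \<rho> * exp ((B + 1) * T1) + \<Lambda> * (\<delta> + 2 / real N)"
          using rho_nonneg Lam0 delta0 NN by simp
        ultimately show ?thesis using Yeq True ut by simp
      next
        case Lm: True
        define j where "j = m - L"
        have wm: "w m = z j" using Lm w_def by (simp add: j_def)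
        have jr: "real j = real m - real L" using Lm by (simp add: j_def)
        have "real j < \<delta> * real N + 2"
        proof -
          have "t * real N < 0" using True NN by (simp add: mult_neg_pos)
          then have "s < real N * \<tau>" using True by (simp add: s_def algebra_simps)
          then show ?thesis using jr ms1 Lb2 by (simp add: algebra_simps)
        qed
        then have jN: "real j / real N \<le> \<delta> + 2 / real N" using NN by (simp add: field_simps)
        have jM: "j \<le> M" using mc by (simp add: j_def)
        have "\<bar>z j - \<mu>\<bar> \<le> \<bar>z j - u (real j / real N)\<bar> + \<bar>u (real j / real N) - u 0\<bar>"
          using u0[of 0] by linarith
        also have "\<dots> \<le> \<rho> * exp ((B + 1) * T1) + \<Lambda> * (\<delta> + 2 / real N)"
        proof (intro add_mono)
          show "\<bar>z j - u (real j / real N)\<bar> \<le> \<rho> * exp ((B + 1) * T1)" using approx[OF jM] by simp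
          have "real j \<le> real M" using jM by simp
          then have "real j \<le> T1 * real N" using MT by linarith
          then have "real j / real N \<le> T1" using NN by (simp add: divide_le_eq)
          then have "\<bar>u (real j / real N) - u 0\<bar> \<le> \<Lambda> * \<bar>real j / real N - 0\<bar>"
            using ulip[of 0 "real j / real N"] T1 T tau by auto
          also have "\<dots> \<le> \<Lambda> * (\<delta> + 2 / real N)" using jN NN Lam0 by (intro mult_left_mono) auto
          finally show "\<bar>u (real j / real N) - u 0\<bar> \<le> \<Lambda> * (\<delta> + 2 / real N)" .
        qed
        finally show ?thesis using Yeq True ut wm by simp
      qed
    qed
  qed
qed

lemma step_prob: "prob_space step_space"
  unfolding step_space_def
  by (intro prob_space_pair prob_space_measure_pmf prob_space_exponential_density) simp

lemma hp_pps: "product_prob_space (\<lambda>_::nat. step_space)"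
  using step_prob
  by (simp add: product_prob_space_def product_prob_space_axioms_def product_sigma_finite_def
      prob_space_imp_sigma_finite)

lemma hp_prob: "prob_space hp_space"
proof -
  interpret P: product_prob_space "\<lambda>_::nat. step_space" UNIV by (rule hp_pps)
  show ?thesis unfolding hp_space_def by (rule P.P.prob_space_axioms)
qed

lemma hp_comp_distr: "distr hp_space step_space (\<lambda>\<omega>. \<omega> i) = step_space"
proof -
  interpret P: product_prob_space "\<lambda>_::nat. step_space" UNIV by (rule hp_pps)
  show ?thesis unfolding hp_space_def by (rule P.PiM_component) simp
qed

lemma hp_comp_meas: "(\<lambda>\<omega>. \<omega> i) \<in> measurable hp_space step_space"
  unfolding hp_space_def by (rule measurable_component_singleton) simp

lemma hp_comp_integral:
  assumes g: "g \<in> borel_measurable step_space"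
  shows "integral\<^sup>L hp_space (\<lambda>\<omega>. g (\<omega> i)) = integral\<^sup>L step_space g"
    and "integrable hp_space (\<lambda>\<omega>. g (\<omega> i)) \<longleftrightarrow> integrable step_space (g :: _ \<Rightarrow> real)"
proof -
  show "integral\<^sup>L hp_space (\<lambda>\<omega>. g (\<omega> i)) = integral\<^sup>L step_space g"
    using integral_distr[OF hp_comp_meas g, of i] hp_comp_distr[of i] by simp
  show "integrable hp_space (\<lambda>\<omega>. g (\<omega> i)) \<longleftrightarrow> integrable step_space g"
    using integrable_distr_eq[OF hp_comp_meas g, of i] hp_comp_distr[of i] by simp
qed

lemma hp_indep_pair:
  assumes ij: "i \<noteq> j" and f: "f \<in> borel_measurable step_space" and fi: "integrable step_space (f :: _ \<Rightarrow> real)"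
  shows "integral\<^sup>L hp_space (\<lambda>\<omega>. f (\<omega> i) * f (\<omega> j)) = (integral\<^sup>L step_space f)^2"
    and "integrable hp_space (\<lambda>\<omega>. f (\<omega> i) * f (\<omega> j))"
proof -
  interpret P: product_prob_space "\<lambda>_::nat. step_space" UNIV by (rule hp_pps)
  interpret H: prob_space hp_space by (rule hp_prob)
  have ind: "H.indep_vars (\<lambda>_. step_space) (\<lambda>l \<omega>. \<omega> l) {i, j}"
  proof -
    have rv: "\<And>l. (\<lambda>\<omega>. \<omega> l) \<in> measurable hp_space step_space" by (rule hp_comp_meas)
    have "distr hp_space (Pi\<^sub>M {i, j} (\<lambda>_. step_space)) (\<lambda>x. \<lambda>l\<in>{i, j}. x l) = Pi\<^sub>M {i, j} (\<lambda>_. step_space)"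
      unfolding hp_space_def using P.distr_PiM_restrict_finite[of "{i, j}"] by simp
    also have "\<dots> = Pi\<^sub>M {i, j} (\<lambda>l. distr hp_space step_space (\<lambda>\<omega>. \<omega> l))"
      by (simp add: hp_comp_distr)
    finally have eq: "distr hp_space (Pi\<^sub>M {i, j} (\<lambda>_. step_space)) (\<lambda>x. \<lambda>l\<in>{i, j}. x l) = Pi\<^sub>M {i, j} (\<lambda>l. distr hp_space step_space (\<lambda>\<omega>. \<omega> l))" .
    show ?thesis
      by (rule H.indep_vars_iff_distr_eq_PiM[THEN iffD2, OF _ rv eq]) simp
  qed
  have ind2: "H.indep_vars (\<lambda>_. borel) (\<lambda>l \<omega>. f (\<omega> l)) {i, j}"
    using H.indep_vars_compose2[OF ind, of "\<lambda>_. f" "\<lambda>_. borel"] f by simp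
  have intf: "integrable hp_space (\<lambda>\<omega>. f (\<omega> l))" for l using hp_comp_integral(2)[OF f] fi by simp
  have "integral\<^sup>L hp_space (\<lambda>\<omega>. \<Prod>l\<in>{i, j}. f (\<omega> l)) = (\<Prod>l\<in>{i, j}. integral\<^sup>L hp_space (\<lambda>\<omega>. f (\<omega> l)))"
    by (rule H.indep_vars_lebesgue_integral[OF _ ind2 intf]) simp
  then show "integral\<^sup>L hp_space (\<lambda>\<omega>. f (\<omega> i) * f (\<omega> j)) = (integral\<^sup>L step_space f)^2"
    using ij by (simp add: hp_comp_integral(1)[OF f] power2_eq_square)
  have "integrable hp_space (\<lambda>\<omega>. \<Prod>l\<in>{i, j}. f (\<omega> l))"
    by (rule H.indep_vars_integrable[OF _ ind2 intf]) simp
  then show "integrable hp_space (\<lambda>\<omega>. f (\<omega> i) * f (\<omega> j))" using ij by simp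
qed

lemma hp_second_moment:
  fixes f :: "bool \<times> real \<Rightarrow> real"
  assumes f: "f \<in> borel_measurable step_space" and f2: "integrable step_space (\<lambda>x. f x ^ 2)"
    and E0: "integral\<^sup>L step_space f = 0" and EV: "integral\<^sup>L step_space (\<lambda>x. f x ^ 2) = V"
  shows "integrable hp_space (\<lambda>\<omega>. (\<Sum>j<k. f (\<omega> j))^2)"
    and "integral\<^sup>L hp_space (\<lambda>\<omega>. (\<Sum>j<k. f (\<omega> j))^2) = real k * V"
    and "integrable hp_space (\<lambda>\<omega>. \<Sum>j<k. f (\<omega> j))"
    and "integral\<^sup>L hp_space (\<lambda>\<omega>. \<Sum>j<k. f (\<omega> j)) = 0"
proof -
  interpret S: prob_space step_space by (rule step_prob)
  have fi: "integrable step_space f" by (rule S.square_integrable_imp_integrable[OF f f2])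
  have f2m: "(\<lambda>x. f x ^ 2) \<in> borel_measurable step_space" using f by measurable
  have ifi: "integrable hp_space (\<lambda>\<omega>. f (\<omega> l))" for l using hp_comp_integral(2)[OF f] fi by simp
  have ipair: "integrable hp_space (\<lambda>\<omega>. f (\<omega> i) * f (\<omega> j))" for i j
  proof (cases "i = j")
    case True then show ?thesis using hp_comp_integral(2)[OF f2m, of i] f2 by (simp add: power2_eq_square)
  next
    case False then show ?thesis using hp_indep_pair(2)[OF False f fi] by simp
  qed
  have Epair: "integral\<^sup>L hp_space (\<lambda>\<omega>. f (\<omega> i) * f (\<omega> j)) = (if i = j then V else 0)" for i j
  proof (cases "i = j")
    case True then show ?thesis using hp_comp_integral(1)[OF f2m, of i] EV by (simp add: power2_eq_square)
  next
    case False then show ?thesis using hp_indep_pair(1)[OF False f fi] E0 by simp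
  qed
  have sq: "(\<Sum>j<k. f (\<omega> j))^2 = (\<Sum>i<k. \<Sum>j<k. f (\<omega> i) * f (\<omega> j))" for \<omega>
    by (simp add: power2_eq_square sum_product)
  show "integrable hp_space (\<lambda>\<omega>. (\<Sum>j<k. f (\<omega> j))^2)"
    unfolding sq by (intro Bochner_Integration.integrable_sum ipair)
  have "integral\<^sup>L hp_space (\<lambda>\<omega>. (\<Sum>j<k. f (\<omega> j))^2) = (\<Sum>i<k. \<Sum>j<k. integral\<^sup>L hp_space (\<lambda>\<omega>. f (\<omega> i) * f (\<omega> j)))"
    unfolding sq by (simp add: integral_sum ipair)
  also have "\<dots> = (\<Sum>i<k. V)" by (simp add: Epair)
  finally show "integral\<^sup>L hp_space (\<lambda>\<omega>. (\<Sum>j<k. f (\<omega> j))^2) = real k * V" by simp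
  show "integrable hp_space (\<lambda>\<omega>. \<Sum>j<k. f (\<omega> j))" by (intro Bochner_Integration.integrable_sum ifi)
  show "integral\<^sup>L hp_space (\<lambda>\<omega>. \<Sum>j<k. f (\<omega> j)) = 0"
    by (simp add: integral_sum ifi hp_comp_integral(1)[OF f] E0)
qed

lemma hp_cheb:
  fixes f :: "bool \<times> real \<Rightarrow> real"
  assumes f: "f \<in> borel_measurable step_space" and f2: "integrable step_space (\<lambda>x. f x ^ 2)"
    and E0: "integral\<^sup>L step_space f = 0" and EV: "integral\<^sup>L step_space (\<lambda>x. f x ^ 2) = V"
    and a: "a > 0"
  shows "measure hp_space {\<omega> \<in> space hp_space. a \<le> \<bar>\<Sum>j<k. f (\<omega> j)\<bar>} \<le> real k * V / a^2"
proof -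
  interpret H: prob_space hp_space by (rule hp_prob)
  have fm: "(\<lambda>\<omega>. f (\<omega> j)) \<in> borel_measurable hp_space" for j
    using measurable_compose[OF hp_comp_meas f] .
  have Xm: "(\<lambda>\<omega>. \<Sum>j<k. f (\<omega> j)) \<in> borel_measurable hp_space"
    by (intro borel_measurable_sum fm)
  note sm = hp_second_moment[OF f f2 E0 EV, of k]
  have "measure hp_space {\<omega> \<in> space hp_space. a \<le> \<bar>(\<Sum>j<k. f (\<omega> j)) - H.expectation (\<lambda>\<omega>. \<Sum>j<k. f (\<omega> j))\<bar>}
      \<le> H.variance (\<lambda>\<omega>. \<Sum>j<k. f (\<omega> j)) / a^2"
    by (rule H.Chebyshev_inequality[OF Xm sm(1) a])
  then show ?thesis using sm by simp
qed

abbreviation "expD \<equiv> density lborel (exponential_density 1)"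
abbreviation "bernM \<equiv> measure_pmf (bernoulli_pmf (1/2))"

lemma expD_prob: "prob_space expD" by (rule prob_space_exponential_density) simp

lemma distr_fst_step: "distr step_space bernM fst = bernM"
  unfolding step_space_def by (rule prob_space.distr_pair_fst[OF expD_prob])

lemma distr_snd_step: "distr step_space expD snd = expD"
proof -
  interpret D: prob_space expD by (rule expD_prob)
  interpret P1: prob_space bernM by (rule prob_space_measure_pmf)
  show ?thesis unfolding step_space_def
  proof (intro measure_eqI)
    fix A assume A: "A \<in> sets (distr (bernM \<Otimes>\<^sub>M expD) expD snd)"
    then have "emeasure (distr (bernM \<Otimes>\<^sub>M expD) expD snd) A = emeasure (bernM \<Otimes>\<^sub>M expD) (space bernM \<times> A)"
      by (auto simp add: emeasure_distr space_pair_measure dest: sets.sets_into_space intro!: arg_cong2[where f=emeasure])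
    with A show "emeasure (distr (bernM \<Otimes>\<^sub>M expD) expD snd) A = emeasure expD A"
      by (simp add: D.emeasure_pair_measure_Times measure_pmf.emeasure_space_1)
  qed simp
qed

lemma fst_meas: "fst \<in> measurable step_space bernM"
  unfolding step_space_def by (rule measurable_fst)

lemma snd_meas: "snd \<in> measurable step_space expD"
  unfolding step_space_def by (rule measurable_snd)

definition f1 :: "bool \<times> real \<Rightarrow> real" where "f1 = (\<lambda>x. if fst x then 1 else -1)"
definition f2 :: "bool \<times> real \<Rightarrow> real" where "f2 = (\<lambda>x. snd x - 1)"

lemma f1_meas: "f1 \<in> borel_measurable step_space"
proof -
  have "(\<lambda>b::bool. if b then 1 else -1::real) \<in> borel_measurable bernM" by simp
  from measurable_compose[OF fst_meas this] show ?thesis by (simp add: f1_def)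
qed

lemma f1_sq: "f1 x ^ 2 = 1" by (simp add: f1_def)

lemma f1_facts:
  "integrable step_space (\<lambda>x. f1 x ^ 2)" "integral\<^sup>L step_space f1 = 0"
  "integral\<^sup>L step_space (\<lambda>x. f1 x ^ 2) = 1"
proof -
  interpret S: prob_space step_space by (rule step_prob)
  show "integrable step_space (\<lambda>x. f1 x ^ 2)" by (simp add: f1_sq)
  show "integral\<^sup>L step_space (\<lambda>x. f1 x ^ 2) = 1" by (simp add: f1_sq S.prob_space)
  have "integral\<^sup>L step_space f1 = integral\<^sup>L (distr step_space bernM fst) (\<lambda>b::bool. if b then 1 else -1::real)"
    by (subst integral_distr[OF fst_meas]) (auto simp: f1_def)
  also have "\<dots> = 0" by (simp add: distr_fst_step)
  finally show "integral\<^sup>L step_space f1 = 0" .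
qed

lemma expD_distributed: "distributed expD lborel (\<lambda>x. x) (exponential_density 1)"
  unfolding distributed_def
  by (auto intro!: measurable_ident_sets distr_id2)

lemma expD_moment: "integrable expD (\<lambda>x. x ^ i)" "integral\<^sup>L expD (\<lambda>x. x ^ i) = fact i"
proof -
  interpret D: prob_space expD by (rule expD_prob)
  show "integrable expD (\<lambda>x. x ^ i)" using D.erlang_ith_moment_integrable[OF _ expD_distributed] by simp
  show "integral\<^sup>L expD (\<lambda>x. x ^ i) = fact i" using D.erlang_ith_moment[OF _ expD_distributed, of i] by simp
qed

lemma f2_meas: "f2 \<in> borel_measurable step_space"
proof -
  have "(\<lambda>s::real. s - 1) \<in> borel_measurable expD" by simp
  from measurable_compose[OF snd_meas this] show ?thesis by (simp add: f2_def)
qed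

lemma f2_facts:
  "integrable step_space (\<lambda>x. f2 x ^ 2)" "integral\<^sup>L step_space f2 = 0"
  "integral\<^sup>L step_space (\<lambda>x. f2 x ^ 2) = 1"
proof -
  interpret D: prob_space expD by (rule expD_prob)
  have m2: "(\<lambda>s::real. (s - 1)^2) \<in> borel_measurable expD" by simp
  have m1: "(\<lambda>s::real. s - 1) \<in> borel_measurable expD" by simp
  have i1: "integrable expD (\<lambda>s. s)" using expD_moment(1)[of 1] by simp
  have i2: "integrable expD (\<lambda>s. s^2)" using expD_moment(1)[of 2] by simp
  have e1: "integral\<^sup>L expD (\<lambda>s. s) = 1" using expD_moment(2)[of 1] by simp
  have e2: "integral\<^sup>L expD (\<lambda>s. s^2) = 2" using expD_moment(2)[of 2] by simp
  have eq: "(\<lambda>s::real. (s - 1)^2) = (\<lambda>s. s^2 - 2 * s + 1)" by (auto simp: power2_eq_square algebra_simps)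
  have ia: "integrable expD (\<lambda>s::real. (s - 1)^2)" unfolding eq using i1 i2 by auto
  have ib: "integrable expD (\<lambda>s::real. s - 1)" using i1 by auto
  show "integrable step_space (\<lambda>x. f2 x ^ 2)"
    using integrable_distr_eq[OF snd_meas m2] ia by (simp add: distr_snd_step f2_def)
  have p1: "D.prob UNIV = 1" using D.prob_space by simp
  have "integral\<^sup>L expD (\<lambda>s::real. s - 1) = integral\<^sup>L expD (\<lambda>s. s) - integral\<^sup>L expD (\<lambda>s. 1)"
    by (rule Bochner_Integration.integral_diff) (use i1 in auto)
  then have "integral\<^sup>L expD (\<lambda>s::real. s - 1) = 0" using e1 p1 by simp
  then show "integral\<^sup>L step_space f2 = 0"
    using integral_distr[OF snd_meas m1] by (simp add: distr_snd_step f2_def)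
  have "integral\<^sup>L expD (\<lambda>s::real. (s - 1)^2) = 1" unfolding eq using i1 i2 e1 e2 p1 by simp
  then show "integral\<^sup>L step_space (\<lambda>x. f2 x ^ 2) = 1"
    using integral_distr[OF snd_meas m2] by (simp add: distr_snd_step f2_def)
qed

lemma AE_snd_nonneg: "AE \<omega> in hp_space. \<forall>k. 0 \<le> snd (\<omega> k)"
proof -
  interpret P: product_prob_space "\<lambda>_::nat. step_space" UNIV by (rule hp_pps)
  have "AE s in expD. 0 \<le> s"
    by (subst AE_density) (auto simp: exponential_density_def)
  then have "AE x in distr step_space expD snd. 0 \<le> x" unfolding distr_snd_step .
  then have st: "AE x in step_space. 0 \<le> snd x" by (rule AE_distrD[OF snd_meas])
  show ?thesis unfolding hp_space_def
    by (subst AE_all_countable) (auto intro!: P.AE_component st)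
qed

lemma null_neg:
  "{\<omega> \<in> space hp_space. \<not> (\<forall>k. 0 \<le> snd (\<omega> k))} \<in> sets hp_space"
  "measure hp_space {\<omega> \<in> space hp_space. \<not> (\<forall>k. 0 \<le> snd (\<omega> k))} = 0"
proof -
  have m: "(\<lambda>\<omega>. snd (\<omega> k)) \<in> borel_measurable hp_space" for k
    using measurable_compose[OF hp_comp_meas measurable_compose[OF snd_meas, of "\<lambda>x. x"]] by simp
  show s: "{\<omega> \<in> space hp_space. \<not> (\<forall>k. 0 \<le> snd (\<omega> k))} \<in> sets hp_space"
    using m by measurable
  have "emeasure hp_space {\<omega> \<in> space hp_space. \<not> (\<forall>k. 0 \<le> snd (\<omega> k))} = 0"
    using AE_iff_measurable[OF s refl] AE_snd_nonneg by simp
  then show "measure hp_space {\<omega> \<in> space hp_space. \<not> (\<forall>k. 0 \<le> snd (\<omega> k))} = 0"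
    by (simp add: measure_def)
qed

lemma S_lip:
  fixes \<omega> :: "nat \<Rightarrow> bool \<times> real"
  shows "j \<le> k \<Longrightarrow> \<bar>(\<Sum>l<k. f1 (\<omega> l)) - (\<Sum>l<j. f1 (\<omega> l))\<bar> \<le> real (k - j)"
proof (induction k)
  case 0 then show ?case by simp
next
  case (Suc k)
  show ?case
  proof (cases "j = Suc k")
    case True then show ?thesis by simp
  next
    case False
    then have jk: "j \<le> k" using Suc.prems by simp
    have "\<bar>f1 (\<omega> k)\<bar> = 1" by (simp add: f1_def)
    then have "\<bar>(\<Sum>l<Suc k. f1 (\<omega> l)) - (\<Sum>l<j. f1 (\<omega> l))\<bar> \<le> \<bar>(\<Sum>l<k. f1 (\<omega> l)) - (\<Sum>l<j. f1 (\<omega> l))\<bar> + 1"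
      by simp
    also have "\<dots> \<le> real (k - j) + 1" using Suc.IH[OF jk] by simp
    also have "\<dots> = real (Suc k - j)" using jk by (simp add: Suc_diff_le)
    finally show ?thesis .
  qed
qed

lemma div_mult_le': "(k div g) * g \<le> (k::nat)"
  by simp

lemma grid_S:
  fixes \<omega> :: "nat \<Rightarrow> bool \<times> real" and a :: real
  assumes g: "0 < g" and ga: "real g \<le> a" and MI: "M < I * g"
    and G: "\<forall>i\<le>I. \<bar>\<Sum>j<i * g. f1 (\<omega> j)\<bar> < a"
  shows "\<forall>k\<le>M. \<bar>\<Sum>j<k. f1 (\<omega> j)\<bar> \<le> 2 * a"
proof (intro allI impI)
  fix k assume k: "k \<le> M"
  define i where "i = k div g"
  have ik: "i * g \<le> k" by (simp add: i_def)
  have kr: "k - i * g < g" using g by (simp add: i_def minus_div_mult_eq_mod)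
  have "i < I"
  proof (rule ccontr)
    assume "\<not> i < I"
    then have "I * g \<le> i * g" by simp
    then show False using ik k MI by linarith
  qed
  have "\<bar>(\<Sum>j<k. f1 (\<omega> j)) - (\<Sum>j<i * g. f1 (\<omega> j))\<bar> \<le> real (k - i * g)" by (rule S_lip[OF ik])
  moreover have "real (k - i * g) \<le> a" using kr ga by linarith
  moreover have "\<bar>\<Sum>j<i * g. f1 (\<omega> j)\<bar> < a" using G \<open>i < I\<close> by simp
  ultimately show "\<bar>\<Sum>j<k. f1 (\<omega> j)\<bar> \<le> 2 * a" by linarith
qed

lemma jump_f2: "jump_time \<omega> n - real n = (\<Sum>j<n. f2 (\<omega> j))"
  by (simp add: jump_time_def f2_def sum_subtractf)

lemma grid_J:
  fixes \<omega> :: "nat \<Rightarrow> bool \<times> real" and a :: real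
  assumes pos: "\<forall>k. 0 \<le> snd (\<omega> k)"
    and g: "0 < g" and ga: "real g \<le> a" and MI: "M < I * g"
    and G: "\<forall>i\<le>I. \<bar>\<Sum>j<i * g. f2 (\<omega> j)\<bar> < a"
  shows "\<forall>n\<le>M. \<bar>jump_time \<omega> n - real n\<bar> \<le> 2 * a"
proof (intro allI impI)
  fix n assume n: "n \<le> M"
  define i where "i = n div g"
  have i1: "i * g \<le> n" by (simp add: i_def)
  have i2: "n < Suc i * g" using g by (simp add: i_def) (metis add.commute div_mult_mod_eq mod_less_divisor add_less_cancel_left)
  have "i < I"
  proof (rule ccontr)
    assume "\<not> i < I"
    then have "I * g \<le> i * g" by simp
    then show False using i1 n MI by linarith
  qed
  then have iI: "Suc i \<le> I" by simp
  have J1: "jump_time \<omega> (i * g) \<le> jump_time \<omega> n" by (rule jump_time_mono[OF pos i1])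
  have J2: "jump_time \<omega> n \<le> jump_time \<omega> (Suc i * g)" using i2 by (intro jump_time_mono[OF pos]) simp
  have a1: "\<bar>jump_time \<omega> (i * g) - real (i * g)\<bar> < a" using G \<open>i < I\<close> jump_f2[of \<omega> "i * g"] by simp
  have "\<bar>\<Sum>j<Suc i * g. f2 (\<omega> j)\<bar> < a" using G iI by blast
  then have a2: "\<bar>jump_time \<omega> (Suc i * g) - real (Suc i * g)\<bar> < a" by (simp only: jump_f2)
  have q1: "real n < real (Suc i * g)" using i2 by (simp only: of_nat_less_iff)
  have q2: "real (i * g) \<le> real n" using i1 by (simp only: of_nat_le_iff)
  have q3: "real (Suc i * g) = real (i * g) + real g" by (simp add: algebra_simps)
  have r1: "real n - real (i * g) \<le> a" using q1 q3 ga by linarith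
  have r2: "real (Suc i * g) - real n \<le> a" using q2 q3 ga by linarith
  show "\<bar>jump_time \<omega> n - real n\<bar> \<le> 2 * a" using J1 J2 a1 a2 r1 r2 by linarith
qed

theorem theorem2p1:
  fixes \<tau> \<mu> T :: real
  assumes "\<tau> > 0" and "0 < \<mu>" and "\<mu> < 1" and "T > 0"
  shows "\<exists>u. hutchinson_sol \<tau> \<mu> T u \<and>
           (\<forall>v. hutchinson_sol \<tau> \<mu> T v \<longrightarrow> (\<forall>t\<in>{-\<tau>..T}. v t = u t)) \<and>
           (\<forall>\<epsilon>>0. \<exists>A :: nat \<Rightarrow> (nat \<Rightarrow> bool \<times> real) set.
              (\<forall>N\<ge>1. A N \<in> sets hp_space \<and>
                 {\<omega> \<in> space hp_space. skorokhod_dist (-\<tau>) T (Yproc \<tau> \<mu> N \<omega>) u > ereal \<epsilon>} \<subseteq> A N) \<and>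
              (\<lambda>N. measure hp_space (A N)) \<longlonglongrightarrow> 0)"
proof -
  note tau = assms(1) and mu = assms(2) and T = assms(4)
  define T1 where "T1 = T + \<tau> + 1"
  have T1pos: "T1 > 0" using tau T by (simp add: T1_def)
  obtain u where u0: "\<forall>t\<le>0. u t = \<mu>" and uc: "continuous_on UNIV u"
    and ud: "\<forall>x. 0 < x \<and> x < T1 + 1 \<longrightarrow> (u has_real_derivative u x * (1 - u (x - \<tau>)) / 2) (at x)"
    using sol_exists[OF tau, of \<mu> "T1 + 1"] by blast
  interpret hsol \<tau> \<mu> "T1 + 1" u
    by unfold_locales (use tau u0 uc ud in auto)
  have TT: "0 < T" "T < T1 + 1" using T tau by (auto simp: T1_def)
  have sol: "hutchinson_sol \<tau> \<mu> T u" by (rule is_sol[OF TT])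
  have uniq: "\<forall>v. hutchinson_sol \<tau> \<mu> T v \<longrightarrow> (\<forall>t\<in>{-\<tau>..T}. v t = u t)"
    using unique[OF TT] by blast
  obtain B where B1: "B \<ge> 1" and Bmu: "\<bar>\<mu>\<bar> \<le> B" and ubd: "\<forall>t\<le>T1. \<bar>u t\<bar> \<le> B"
    using bound_exists[of T1] by auto
  define \<Lambda> where "\<Lambda> = B * (1 + B) / 2"
  define K where "K = \<Lambda> * (1 + 2 * B) / 2"
  have Lam0: "\<Lambda> \<ge> 0" and K0: "K \<ge> 0" using B1 by (auto simp: \<Lambda>_def K_def)
  have T1lt: "T1 < T1 + 1" by simp
  have ulip: "\<And>s t. s \<le> T1 \<Longrightarrow> t \<le> T1 \<Longrightarrow> \<bar>u t - u s\<bar> \<le> \<Lambda> * \<bar>t - s\<bar>"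
    unfolding \<Lambda>_def by (rule lipschitz[OF T1lt _ ubd]) (use B1 in auto)
  have ueul: "\<And>t h. 0 \<le> t \<Longrightarrow> 0 \<le> h \<Longrightarrow> t + h \<le> T1 \<Longrightarrow>
        \<bar>u (t + h) - u t - h * (u t * (1 - u (t - \<tau>)) / 2)\<bar> \<le> K * h^2"
    unfolding K_def \<Lambda>_def by (rule euler[OF T1lt _ ubd]) (use B1 in auto)
  have u0': "\<And>t. t \<le> 0 \<Longrightarrow> u t = \<mu>" using u0 by simp
  have ubd': "\<And>t. t \<le> T1 \<Longrightarrow> \<bar>u t\<bar> \<le> B" using ubd by simp
  have conv: "\<forall>\<epsilon>>0. \<exists>A :: nat \<Rightarrow> (nat \<Rightarrow> bool \<times> real) set.
              (\<forall>N\<ge>1. A N \<in> sets hp_space \<and>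
                 {\<omega> \<in> space hp_space. skorokhod_dist (-\<tau>) T (Yproc \<tau> \<mu> N \<omega>) u > ereal \<epsilon>} \<subseteq> A N) \<and>
              (\<lambda>N. measure hp_space (A N)) \<longlonglongrightarrow> 0"
  proof (intro allI impI)
    fix \<epsilon> :: real assume \<epsilon>: "\<epsilon> > 0"
    define \<epsilon>' where "\<epsilon>' = min \<epsilon> 1"
    have \<epsilon>'0: "\<epsilon>' > 0" "\<epsilon>' \<le> 1" "\<epsilon>' \<le> \<epsilon>" using \<epsilon> by (auto simp: \<epsilon>'_def)
    define E where "E = exp ((B + 1) * T1)"
    have E0: "E > 0" by (simp add: E_def)
    define Q where "Q = (B + 1) * (B + 2) + T1 * ((B + 1) * (B + 2) * (2 * B + 3))"
    have Q0: "Q \<ge> 0" using B1 T1pos by (simp add: Q_def)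
    define D where "D = Q * E / 2 + \<Lambda> + 1"
    have D0: "D \<ge> 1" using Q0 E0 Lam0 by (simp add: D_def)
    define \<delta> where "\<delta> = min (1/2) (\<epsilon>' / (4 * D))"
    have \<delta>0: "\<delta> > 0" "\<delta> \<le> 1/2" using \<epsilon>'0 D0 by (auto simp: \<delta>_def)
    have \<delta>D: "\<delta> * (Q * E / 2 + \<Lambda>) \<le> \<epsilon>' / 4"
    proof -
      have "\<delta> * (Q * E / 2 + \<Lambda>) \<le> \<delta> * D" using \<delta>0 by (intro mult_left_mono) (auto simp: D_def)
      also have "\<dots> \<le> (\<epsilon>' / (4 * D)) * D" using D0 by (intro mult_right_mono) (auto simp: \<delta>_def)
      also have "\<dots> = \<epsilon>' / 4" using D0 by simp
      finally show ?thesis .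
    qed
    define R :: nat where "R = nat \<lceil>2 / \<delta>\<rceil> + 1"
    have R1: "R \<ge> 1" by (simp add: R_def)
    have R2: "real R \<ge> 2 / \<delta>" unfolding R_def by linarith
    define c0 where "c0 = T1 * (K + B * \<Lambda> / 2) * E + 2 * \<Lambda>"
    have c00: "c0 \<ge> 0" using T1pos K0 B1 Lam0 E0 by (simp add: c0_def)
    define N0 :: nat where "N0 = nat \<lceil>3 + B + 2 * real R + 4 * c0 / \<epsilon>'\<rceil>"
    define M where "M N = nat \<lfloor>T1 * real N\<rfloor>" for N :: nat
    define g where "g N = N div R" for N
    define I where "I N = M N div g N + 1" for N
    define Z0 where "Z0 = {\<omega> \<in> space hp_space. \<not> (\<forall>k. 0 \<le> snd (\<omega> k))}"
    define BS where "BS N i = {\<omega> \<in> space hp_space. \<delta> * real N / 2 \<le> \<bar>\<Sum>j<i * g N. f1 (\<omega> j)\<bar>}" for N i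
    define BJ where "BJ N i = {\<omega> \<in> space hp_space. \<delta> * real N / 2 \<le> \<bar>\<Sum>j<i * g N. f2 (\<omega> j)\<bar>}" for N i
    define A where "A N = (if N0 \<le> N then Z0 \<union> (\<Union>i\<in>{..I N}. BS N i \<union> BJ N i) else space hp_space)" for N
    have sm1: "(\<lambda>\<omega>. \<Sum>j<n. f1 (\<omega> j)) \<in> borel_measurable hp_space" for n
      by (intro borel_measurable_sum measurable_compose[OF hp_comp_meas f1_meas])
    have sm2: "(\<lambda>\<omega>. \<Sum>j<n. f2 (\<omega> j)) \<in> borel_measurable hp_space" for n
      by (intro borel_measurable_sum measurable_compose[OF hp_comp_meas f2_meas])
    have BSm: "BS N i \<in> sets hp_space" for N i unfolding BS_def using sm1 by measurable
    have BJm: "BJ N i \<in> sets hp_space" for N i unfolding BJ_def using sm2 by measurable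
    have Am: "A N \<in> sets hp_space" for N
      unfolding A_def using null_neg(1) BSm BJm by (auto simp: Z0_def)
    have bigN: "3 \<le> real N" "B + 1 \<le> real N" "2 * real R \<le> real N" "c0 / real N \<le> \<epsilon>' / 4"
      if N: "N0 \<le> N" for N
    proof -
      have "3 + B + 2 * real R + 4 * c0 / \<epsilon>' \<le> real N0" unfolding N0_def by linarith
      also have "\<dots> \<le> real N" using N by simp
      finally have h: "3 + B + 2 * real R + 4 * c0 / \<epsilon>' \<le> real N" .
      have c: "0 \<le> 4 * c0 / \<epsilon>'" using c00 \<epsilon>'0 by simp
      show "3 \<le> real N" "B + 1 \<le> real N" "2 * real R \<le> real N" using h c B1 by linarith+
      have "4 * c0 / \<epsilon>' \<le> real N" using h B1 by linarith
      then have "4 * c0 \<le> \<epsilon>' * real N" using \<epsilon>'0 by (simp add: divide_le_eq mult.commute)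
      then show "c0 / real N \<le> \<epsilon>' / 4" using h B1 \<epsilon>'0 by (simp add: divide_le_eq)
    qed
    have gfacts: "0 < g N" "real (g N) \<le> \<delta> * real N / 2" "real N / (2 * real R) \<le> real (g N)"
      if N: "N0 \<le> N" for N
    proof -
      have NR: "2 * real R \<le> real N" using bigN[OF N] by simp
      then have "R \<le> N" using R1 by linarith
      then show "0 < g N" using R1 by (simp add: g_def div_greater_zero_iff)
      have "real (g N) \<le> real N / real R" unfolding g_def by (rule of_nat_div_le_of_nat)
      also have "\<dots> \<le> real N / (2 / \<delta>)" using R2 \<delta>0 R1 by (intro divide_left_mono) (auto intro!: mult_pos_pos divide_pos_pos)
      also have "\<dots> = \<delta> * real N / 2" by simp
      finally show "real (g N) \<le> \<delta> * real N / 2" .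
      have "real N / real R - 1 \<le> real (g N)"
      proof -
        have "real N = real (N div R) * real R + real (N mod R)"
          by (metis div_mult_mod_eq of_nat_add of_nat_mult)
        moreover have "real (N mod R) < real R" using R1 by simp
        ultimately have "real N < (real (N div R) + 1) * real R" by (simp add: algebra_simps)
        moreover have "real R > 0" using R1 by simp
        ultimately have "real N / real R < real (N div R) + 1" by (simp add: divide_less_eq algebra_simps)
        then show ?thesis by (simp add: g_def)
      qed
      moreover have "real N / (2 * real R) \<le> real N / real R - 1"
        using NR R1 by (simp add: field_simps)
      ultimately show "real N / (2 * real R) \<le> real (g N)" by linarith
    qed
    have MI: "M N < I N * g N" if "0 < g N" for N
      unfolding I_def using that by (metis add.commute div_mult_mod_eq mod_less_divisor add_less_cancel_right mult.commute mult_Suc plus_1_eq_Suc)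
    show "\<exists>A :: nat \<Rightarrow> (nat \<Rightarrow> bool \<times> real) set.
              (\<forall>N\<ge>1. A N \<in> sets hp_space \<and>
                 {\<omega> \<in> space hp_space. skorokhod_dist (-\<tau>) T (Yproc \<tau> \<mu> N \<omega>) u > ereal \<epsilon>} \<subseteq> A N) \<and>
              (\<lambda>N. measure hp_space (A N)) \<longlonglongrightarrow> 0"
    proof (intro exI[of _ A] conjI allI impI)
      fix N :: nat assume "N \<ge> 1"
      show "A N \<in> sets hp_space" by (rule Am)
      show "{\<omega> \<in> space hp_space. skorokhod_dist (-\<tau>) T (Yproc \<tau> \<mu> N \<omega>) u > ereal \<epsilon>} \<subseteq> A N"
      proof
        fix \<omega> assume \<omega>: "\<omega> \<in> {\<omega> \<in> space hp_space. skorokhod_dist (-\<tau>) T (Yproc \<tau> \<mu> N \<omega>) u > ereal \<epsilon>}"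
        show "\<omega> \<in> A N"
        proof (cases "N0 \<le> N")
          case False then show ?thesis using \<omega> by (simp add: A_def)
        next
          case N: True
          show ?thesis
          proof (rule ccontr)
            assume nA: "\<omega> \<notin> A N"
            have g1: "\<forall>k. 0 \<le> snd (\<omega> k)" using nA \<omega> N by (auto simp: A_def Z0_def)
            have GS: "\<forall>i\<le>I N. \<bar>\<Sum>j<i * g N. f1 (\<omega> j)\<bar> < \<delta> * real N / 2"
              using nA \<omega> N by (auto simp: A_def BS_def not_le)
            have GJ: "\<forall>i\<le>I N. \<bar>\<Sum>j<i * g N. f2 (\<omega> j)\<bar> < \<delta> * real N / 2"
              using nA \<omega> N by (auto simp: A_def BJ_def not_le)
            note gf = gfacts[OF N]
            have g2': "\<forall>k\<le>M N. \<bar>\<Sum>j<k. f1 (\<omega> j)\<bar> \<le> 2 * (\<delta> * real N / 2)"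
              by (rule grid_S[OF gf(1) gf(2) MI[OF gf(1)] GS])
            have g3': "\<forall>n\<le>M N. \<bar>jump_time \<omega> n - real n\<bar> \<le> 2 * (\<delta> * real N / 2)"
              by (rule grid_J[OF g1 gf(1) gf(2) MI[OF gf(1)] GJ])
            have g2: "\<forall>k\<le>M N. \<bar>\<Sum>j<k. (if fst (\<omega> j) then 1 else -1::real)\<bar> \<le> \<delta> * real N"
              using g2' by (simp add: f1_def)
            have g3: "\<forall>n\<le>M N. \<bar>jump_time \<omega> n - real n\<bar> \<le> \<delta> * real N" using g3' by simp
            define \<rho> where "\<rho> = T1 * (K + B * \<Lambda> / 2) / real N
                + \<delta> * ((B + 1) * (B + 2) + T1 * ((B + 1) * (B + 2) * (2 * B + 3))) / 2"
            note bN = bigN[OF N]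
            have NN: "real N > 0" using bN by simp
            have err: "\<rho> * E + \<Lambda> * (\<delta> + 2 / real N) \<le> \<epsilon>' / 2"
            proof -
              have "\<rho> * E + \<Lambda> * (\<delta> + 2 / real N) = c0 / real N + \<delta> * (Q * E / 2 + \<Lambda>)"
                unfolding \<rho>_def c0_def Q_def using NN by (simp add: field_simps)
              then show ?thesis using bN(4) \<delta>D by linarith
            qed
            have err0: "0 \<le> \<Lambda> * (\<delta> + 2 / real N)" using Lam0 \<delta>0 NN by simp
            have small: "\<rho> * exp ((B + 1) * T1) \<le> 1" using err err0 \<epsilon>'0 unfolding E_def by linarith
            have bound: "\<forall>t\<in>{-\<tau>..T}. \<bar>Yproc \<tau> \<mu> N \<omega> t - u t\<bar> \<le> \<rho> * exp ((B + 1) * T1) + \<Lambda> * (\<delta> + 2 / real N)"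
            proof (rule det_main[OF tau mu T T1_def u0' ubd' ulip ueul B1 Lam0 K0])
              show "0 \<le> \<delta>" "\<delta> \<le> 1/2" using \<delta>0 by auto
              show "3 \<le> N" using bN(1) by simp
              show "B + 1 \<le> real N" by (rule bN(2))
              show "M N = nat \<lfloor>T1 * real N\<rfloor>" by (simp add: M_def)
              show "\<rho> = T1 * (K + B * \<Lambda> / 2) / real N
                + \<delta> * ((B + 1) * (B + 2) + T1 * ((B + 1) * (B + 2) * (2 * B + 3))) / 2" by (simp add: \<rho>_def)
              show "\<rho> * exp ((B + 1) * T1) \<le> 1" by (rule small)
              show "\<forall>k. 0 \<le> snd (\<omega> k)" by (rule g1)
              show "\<forall>k\<le>M N. \<bar>\<Sum>j<k. (if fst (\<omega> j) then 1 else -1::real)\<bar> \<le> \<delta> * real N" by (rule g2)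
              show "\<forall>n\<le>M N. \<bar>jump_time \<omega> n - real n\<bar> \<le> \<delta> * real N" by (rule g3)
            qed
            have "skorokhod_dist (-\<tau>) T (Yproc \<tau> \<mu> N \<omega>) u \<le> ereal (\<rho> * exp ((B + 1) * T1) + \<Lambda> * (\<delta> + 2 / real N))"
            proof (rule skorokhod_le)
              show "- \<tau> \<le> T" using tau T by simp
              show "0 \<le> \<rho> * exp ((B + 1) * T1) + \<Lambda> * (\<delta> + 2 / real N)"
                using bound tau by (meson abs_ge_zero atLeastAtMost_iff order_trans less_imp_le T neg_le_0_iff_le)
              show "\<forall>t\<in>{-\<tau>..T}. \<bar>Yproc \<tau> \<mu> N \<omega> t - u t\<bar> \<le> \<rho> * exp ((B + 1) * T1) + \<Lambda> * (\<delta> + 2 / real N)"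
                by (rule bound)
            qed
            also have "\<dots> \<le> ereal \<epsilon>"
            proof -
              have "\<rho> * exp ((B + 1) * T1) + \<Lambda> * (\<delta> + 2 / real N) \<le> \<epsilon>" using err \<epsilon>'0 unfolding E_def by linarith
              then show ?thesis by simp
            qed
            finally show False using \<omega> by (simp add: not_less[symmetric])
          qed
        qed
      qed
    next
      define c1 where "c1 = (2 * real R * T1 + 2) * (8 * (T1 + 1) / \<delta>^2)"
      have evb: "eventually (\<lambda>N. measure hp_space (A N) \<le> c1 / real N) sequentially"
        unfolding eventually_sequentially
      proof (intro exI[of _ N0] allI impI)
        fix N assume N: "N0 \<le> N"
        note bN = bigN[OF N] and gf = gfacts[OF N]
        have NN: "real N > 0" using bN by simp
        have a0: "\<delta> * real N / 2 > 0" using \<delta>0 NN by simp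
        have ig: "real (i * g N) \<le> (T1 + 1) * real N" if "i \<in> {..I N}" for i
        proof -
          have "i * g N \<le> I N * g N" using that by simp
          also have "\<dots> = (M N div g N) * g N + g N" by (simp add: I_def algebra_simps)
          also have "\<dots> \<le> M N + N"
            using div_times_less_eq_dividend[of "M N" "g N"] div_le_dividend[of N R] unfolding g_def
            by (rule add_mono)
          finally have "real (i * g N) \<le> real (M N) + real N" by linarith
          moreover have "real (M N) \<le> T1 * real N" using T1pos by (simp add: M_def)
          ultimately show ?thesis by (simp add: algebra_simps)
        qed
        have each: "measure hp_space (BS N i \<union> BJ N i) \<le> 8 * (T1 + 1) / (\<delta>^2 * real N)"
          if i: "i \<in> {..I N}" for i
        proof -
          have "measure hp_space (BS N i \<union> BJ N i) \<le> measure hp_space (BS N i) + measure hp_space (BJ N i)"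
            by (rule measure_Un_le[OF BSm BJm])
          also have "\<dots> \<le> real (i * g N) * 1 / (\<delta> * real N / 2)^2 + real (i * g N) * 1 / (\<delta> * real N / 2)^2"
            unfolding BS_def BJ_def
            by (intro add_mono hp_cheb[OF f1_meas f1_facts a0] hp_cheb[OF f2_meas f2_facts a0])
          also have "\<dots> \<le> 2 * ((T1 + 1) * real N) / (\<delta> * real N / 2)^2"
            using ig[OF i] by (simp add: divide_right_mono)
          also have "\<dots> = 8 * (T1 + 1) / (\<delta>^2 * real N)" using NN \<delta>0 by (simp add: field_simps power2_eq_square)
          finally show ?thesis .
        qed
        have cardI: "real (card {..I N}) \<le> 2 * real R * T1 + 2"
        proof -
          have "real (M N div g N) \<le> real (M N) / real (g N)" by (rule of_nat_div_le_of_nat)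
          also have "\<dots> \<le> (T1 * real N) / (real N / (2 * real R))"
            using gf NN T1pos R1 by (intro frac_le) (auto simp: M_def)
          also have "\<dots> = 2 * real R * T1" using NN by (simp add: field_simps)
          finally show ?thesis by (simp add: I_def)
        qed
        have "measure hp_space (A N) \<le> measure hp_space Z0 + measure hp_space (\<Union>i\<in>{..I N}. BS N i \<union> BJ N i)"
        proof -
          have Z0m: "Z0 \<in> sets hp_space" unfolding Z0_def by (rule null_neg(1))
          have Um: "(\<Union>i\<in>{..I N}. BS N i \<union> BJ N i) \<in> sets hp_space"
            by (intro sets.finite_UN sets.Un BSm BJm) auto
          show ?thesis using N measure_Un_le[OF Z0m Um] by (simp add: A_def)
        qed
        also have "measure hp_space Z0 = 0" using null_neg(2) by (simp add: Z0_def)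
        also have "measure hp_space (\<Union>i\<in>{..I N}. BS N i \<union> BJ N i) \<le> (\<Sum>i\<in>{..I N}. measure hp_space (BS N i \<union> BJ N i))"
          by (rule measure_UNION_le) (auto simp: BSm BJm)
        also have "\<dots> \<le> (\<Sum>i\<in>{..I N}. 8 * (T1 + 1) / (\<delta>^2 * real N))" by (intro sum_mono each)
        also have "\<dots> = real (card {..I N}) * (8 * (T1 + 1) / (\<delta>^2 * real N))" by simp
        also have "\<dots> \<le> (2 * real R * T1 + 2) * (8 * (T1 + 1) / (\<delta>^2 * real N))"
          using cardI T1pos \<delta>0 NN by (intro mult_right_mono) auto
        also have "\<dots> = c1 / real N" using NN by (simp add: c1_def field_simps)
        finally show "measure hp_space (A N) \<le> c1 / real N" by simp
      qed
      show "(\<lambda>N. measure hp_space (A N)) \<longlonglongrightarrow> 0"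
      proof (rule tendsto_sandwich[OF _ evb])
        show "eventually (\<lambda>N. 0 \<le> measure hp_space (A N)) sequentially" by simp
        show "(\<lambda>N. 0) \<longlonglongrightarrow> (0::real)" by simp
        show "(\<lambda>N. c1 / real N) \<longlonglongrightarrow> 0" by (rule lim_const_over_n)
      qed
    qed
  qed
  show ?thesis using sol uniq conv by blast
qed


end
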